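(* Let $A$ be a commutative ring, $r,d\ge1$, $B=A[x_1,\dots,x_r]$, let $x^\alpha\in B$ be a monomial and $k,m$ positive integers with $k\le d$. If $km\le d$ then $$\gamma^k(x^{m\alpha})\times\gamma^{d-k}(1)-(-1)^{km-k}m\,\gamma^{km}(x^\alpha)\times\gamma^{d-km}(1)\in\Gamma^d_A(B)_{<km\alpha},$$ and if $km>d$ then $\gamma^k(x^{m\alpha})\times\gamma^{d-k}(1)\in\Gamma^d_A(B)_{<km\alpha}$.
   Context: $\Gamma^d_A(B)$ is identified with the ring of symmetric tensors $\mathrm{TS}^d_A(B)=(B^{\otimes_A d})^{\mathfrak S_d}$ (componentwise multiplication). For a monomial $f$ and $0\le k\le d$, $\gamma^k(f)\times\gamma^{d-k}(1)$ denotes the sum of all distinct tensors obtained by permuting the factors of $f^{\otimes k}\otimes1^{\otimes(d-k)}$, i.e. $\sum_{S\subseteq\{1..d\},|S|=k}\bigotimes_{j=1}^d f_j$ with $f_j=f$ for $j\in S$ and $f_j=1$ otherwise. $B^{\otimes d}$ is $\mathbb{N}^r$-graded by giving $x^{\beta_1}\otimes\dots\otimes x^{\beta_d}$ multidegree $\beta_1+\dots+\beta_d$; this induces an $\mathbb{N}^r$-grading of $\Gamma^d_A(B)$. For $\gamma\in\mathbb{N}^r$, $\Gamma^d_A(B)_{<\gamma}$ is the $A$-subalgebra generated by the homogeneous elements of multidegree $\beta$ with $\beta<\gamma$, where $\beta<\gamma$ means $\beta\le\gamma$ componentwise and $\beta\ne\gamma$. *)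

theory Defs
  imports "HOL-Library.Poly_Mapping" "HOL-Combinatorics.Permutations"
begin

(* 
  Model of B^{\<otimes> d} for B = A[x_1,...,x_r]: the A-algebra with A-basis the pure tensors
  x^{e_1} \<otimes> ... \<otimes> x^{e_d}, i.e. the monoid algebra over the exponent data
  ('d \<times> 'r) \<Rightarrow>\<^sub>0 nat (entry (j,i) = exponent of x_i in tensor factor j).
  The index sets of tensor factors and of variables are finite types 'd and 'r,
  so d = CARD('d) \<ge> 1 and r = CARD('r) \<ge> 1.  Multiplication of poly_mapping is the
  convolution, i.e. componentwise multiplication of pure tensors.
 *)

type_synonym ('d, 'r, 'a) tens = "(('d \<times> 'r) \<Rightarrow>\<^sub>0 nat) \<Rightarrow>\<^sub>0 'a"

definition tmon :: "('d::finite \<Rightarrow> 'r::finite \<Rightarrow> nat) \<Rightarrow> ('d \<times> 'r) \<Rightarrow>\<^sub>0 nat" where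
  "tmon e = Abs_poly_mapping (\<lambda>(j, i). e j i)"

definition ptensor :: "('d::finite \<Rightarrow> 'r::finite \<Rightarrow> nat) \<Rightarrow> ('d, 'r, 'a::comm_ring_1) tens" where
  "ptensor e = Poly_Mapping.single (tmon e) 1"

(* gamma^k(x^\<beta>) \<times> gamma^{d-k}(1): sum over all k-subsets S of tensor positions. *)
definition gam :: "nat \<Rightarrow> ('r::finite \<Rightarrow> nat) \<Rightarrow> ('d::finite, 'r, 'a::comm_ring_1) tens" where
  "gam k \<beta> = (\<Sum>S \<in> {S :: 'd set. card S = k}. ptensor (\<lambda>j. if j \<in> S then \<beta> else (\<lambda>_. 0)))"

definition mdeg :: "(('d::finite \<times> 'r) \<Rightarrow>\<^sub>0 nat) \<Rightarrow> 'r \<Rightarrow> nat" where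
  "mdeg m = (\<lambda>i. \<Sum>j\<in>UNIV. Poly_Mapping.lookup m (j, i))"

definition homogeneous :: "('r \<Rightarrow> nat) \<Rightarrow> ('d::finite, 'r, 'a::comm_ring_1) tens \<Rightarrow> bool" where
  "homogeneous \<beta> p \<longleftrightarrow> (\<forall>m \<in> Poly_Mapping.keys p. mdeg m = \<beta>)"

definition perm_mon :: "('d \<Rightarrow> 'd) \<Rightarrow> (('d::finite \<times> 'r::finite) \<Rightarrow>\<^sub>0 nat) \<Rightarrow> ('d \<times> 'r) \<Rightarrow>\<^sub>0 nat" where
  "perm_mon \<sigma> m = Abs_poly_mapping (\<lambda>(j, i). Poly_Mapping.lookup m (\<sigma> j, i))"

(* Symmetric tensors TS^d_A(B) = \<Gamma>^d_A(B). *)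
definition symmetric :: "('d::finite, 'r::finite, 'a::comm_ring_1) tens \<Rightarrow> bool" where
  "symmetric p \<longleftrightarrow> (\<forall>\<sigma>. \<sigma> permutes (UNIV :: 'd set) \<longrightarrow>
      (\<forall>m. Poly_Mapping.lookup p (perm_mon \<sigma> m) = Poly_Mapping.lookup p m))"

(* A-subalgebra generated by a set G (A embedded as a \<mapsto> a\<cdot>1\<otimes>...\<otimes>1). *)
inductive_set gen_alg :: "('d::finite, 'r::finite, 'a::comm_ring_1) tens set \<Rightarrow> ('d, 'r, 'a) tens set"
  for G where
  scalar: "Poly_Mapping.single 0 a \<in> gen_alg G"
| gen: "g \<in> G \<Longrightarrow> g \<in> gen_alg G"
| add: "p \<in> gen_alg G \<Longrightarrow> q \<in> gen_alg G \<Longrightarrow> p + q \<in> gen_alg G"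
| mult: "p \<in> gen_alg G \<Longrightarrow> q \<in> gen_alg G \<Longrightarrow> p * q \<in> gen_alg G"

(* \<Gamma>^d_A(B)_{<\<gamma>}; on functions 'r \<Rightarrow> nat, < is componentwise \<le> and \<noteq>. *)
definition Gamma_less :: "('r::finite \<Rightarrow> nat) \<Rightarrow> ('d::finite, 'r, 'a::comm_ring_1) tens set" where
  "Gamma_less \<gamma> = gen_alg {p. symmetric p \<and> (\<exists>\<beta>. \<beta> < \<gamma> \<and> homogeneous \<beta> p)}"

end

theory Submission
  imports Defs "HOL-Computational_Algebra.Polynomial" "HOL-Library.Multiset"
begin

lemma lookup_tmon: "Poly_Mapping.lookup (tmon e) (j, i) = e j i"
  unfolding tmon_def by (subst lookup_Abs_poly_mapping) auto

lemma lookup_tmon': "Poly_Mapping.lookup (tmon e) x = e (fst x) (snd x)"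
  by (cases x) (simp add: lookup_tmon)

lemma tmon_inj: "tmon e = tmon e' \<longleftrightarrow> e = e'"
  by (auto simp: poly_mapping_eq_iff fun_eq_iff lookup_tmon')

lemma tmon_add: "tmon e + tmon e' = tmon (\<lambda>j i. e j i + e' j i)"
  by (simp add: poly_mapping_eq_iff fun_eq_iff lookup_tmon' lookup_add)

lemma tmon_zero: "tmon (\<lambda>_ _. 0) = 0"
  by (simp add: poly_mapping_eq_iff fun_eq_iff lookup_tmon')

lemma tmon_lookup: "tmon (\<lambda>j i. Poly_Mapping.lookup E (j, i)) = E"
  by (simp add: poly_mapping_eq_iff fun_eq_iff lookup_tmon')

lemma ptensor_mult: "ptensor e * ptensor e' = ptensor (\<lambda>j i. e j i + e' j i)"
  unfolding ptensor_def by (simp add: mult_single tmon_add)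

lemma ptensor_zero: "ptensor (\<lambda>_ _. 0) = 1"
  unfolding ptensor_def by (simp add: tmon_zero)

lemma prod_ptensor:
  "(\<Prod>l\<in>S. ptensor (F l)) = ptensor (\<lambda>j i. \<Sum>l\<in>S. F l j i)"
proof (induction S rule: infinite_finite_induct)
  case (infinite S) then show ?case by (simp add: ptensor_zero)
next
  case empty then show ?case by (simp add: ptensor_zero)
next
  case (insert x F) then show ?case by (simp add: ptensor_mult)
qed

lemma ptensor_power: "ptensor e ^ a = ptensor (\<lambda>j i. a * e j i)"
  by (induction a) (simp_all add: ptensor_zero ptensor_mult)

lemma mdeg_tmon: "mdeg (tmon e) = (\<lambda>i. \<Sum>j\<in>UNIV. e j i)"
  by (simp add: mdeg_def lookup_tmon)


definition ext :: "('k::monoid_add \<Rightarrow> 'b::comm_ring_1) \<Rightarrow> ('a::comm_ring_1 \<Rightarrow> 'b) \<Rightarrow> ('k \<Rightarrow>\<^sub>0 'a) \<Rightarrow> 'b" where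
  "ext W h p = (\<Sum>x\<in>Poly_Mapping.keys p. h (Poly_Mapping.lookup p x) * W x)"

lemma ext_superset:
  assumes "h 0 = 0" "finite K" "Poly_Mapping.keys p \<subseteq> K"
  shows "ext W h p = (\<Sum>x\<in>K. h (Poly_Mapping.lookup p x) * W x)"
  unfolding ext_def
  by (rule sum.mono_neutral_left) (use assms in \<open>auto simp: in_keys_iff\<close>)

lemma ext_add:
  assumes "h 0 = 0" "\<And>a b. h (a + b) = h a + h b"
  shows "ext W h (p + q) = ext W h p + ext W h q"
proof -
  let ?K = "Poly_Mapping.keys p \<union> Poly_Mapping.keys q"
  have "ext W h (p + q) = (\<Sum>x\<in>?K. h (Poly_Mapping.lookup (p+q) x) * W x)"
    by (rule ext_superset) (use assms keys_add[of p q] in auto)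
  also have "\<dots> = (\<Sum>x\<in>?K. h (Poly_Mapping.lookup p x) * W x) + (\<Sum>x\<in>?K. h (Poly_Mapping.lookup q x) * W x)"
    by (simp add: lookup_add assms(2) distrib_right sum.distrib)
  also have "\<dots> = ext W h p + ext W h q"
    by (subst (1 2) ext_superset[symmetric]) (use assms in auto)
  finally show ?thesis .
qed

lemma ext_zero: "ext W h 0 = 0"
  by (simp add: ext_def)

lemma ext_single:
  assumes "h 0 = 0"
  shows "ext W h (Poly_Mapping.single k a) = h a * W k"
  by (subst ext_superset[where K="{k}"]) (use assms in auto)

lemma ext_sum:
  assumes "h 0 = 0" "\<And>a b. h (a + b) = h a + h b"
  shows "ext W h (\<Sum>i\<in>I. f i) = (\<Sum>i\<in>I. ext W h (f i))"
  by (induction I rule: infinite_finite_induct) (simp_all add: ext_zero ext_add[OF assms])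

lemma pm_expand: "p = (\<Sum>x\<in>Poly_Mapping.keys p. Poly_Mapping.single x (Poly_Mapping.lookup p x))"
  by (rule poly_mapping_eqI) (auto simp: lookup_sum lookup_single when_def in_keys_iff)

lemma ext_mult:
  assumes "h 0 = 0" "\<And>a b. h (a + b) = h a + h b" "\<And>a b. h (a * b) = h a * h b"
    and "\<And>x y. W (x + y) = W x * W y"
  shows "ext W h (p * q) = ext W h p * ext W h q"
proof -
  have "p * q = (\<Sum>x\<in>Poly_Mapping.keys p. \<Sum>y\<in>Poly_Mapping.keys q.
      Poly_Mapping.single (x + y) (Poly_Mapping.lookup p x * Poly_Mapping.lookup q y))"
    by (subst pm_expand[of p], subst pm_expand[of q])
       (simp add: sum_distrib_left sum_distrib_right mult_single sum.swap[of _ "Poly_Mapping.keys q"])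
  then have "ext W h (p * q) = (\<Sum>x\<in>Poly_Mapping.keys p. \<Sum>y\<in>Poly_Mapping.keys q.
      h (Poly_Mapping.lookup p x) * W x * (h (Poly_Mapping.lookup q y) * W y))"
    by (simp add: ext_sum[OF assms(1,2)] ext_single[where h=h, OF assms(1)] assms(3,4) mult_ac)
  also have "\<dots> = ext W h p * ext W h q"
    by (simp add: ext_def sum_product)
  finally show ?thesis .
qed

lemma ext_one:
  assumes "h 0 = 0" "h 1 = 1" "W 0 = 1"
  shows "ext W h 1 = 1"
  using ext_single[of h W 0 1] assms by simp

lemma ext_uminus:
  assumes "h 0 = 0" "\<And>a b. h (a + b) = h a + h b"
  shows "ext W h (- p) = - ext W h p"
  using ext_add[OF assms, of W p "-p"] by (simp add: ext_zero eq_neg_iff_add_eq_0 add.commute)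

lemma ext_diff:
  assumes "h 0 = 0" "\<And>a b. h (a + b) = h a + h b"
  shows "ext W h (p - q) = ext W h p - ext W h q"
  using ext_add[OF assms, of W p "-q"] ext_uminus[OF assms, of W q] by simp


lemma lookup_perm_mon: "Poly_Mapping.lookup (perm_mon \<sigma> m) (j, i) = Poly_Mapping.lookup m (\<sigma> j, i)"
  unfolding perm_mon_def by (subst lookup_Abs_poly_mapping) auto

lemma lookup_perm_mon': "Poly_Mapping.lookup (perm_mon \<sigma> m) x = Poly_Mapping.lookup m (\<sigma> (fst x), snd x)"
  by (cases x) (simp add: lookup_perm_mon)

lemma perm_mon_add: "perm_mon \<sigma> (a + b) = perm_mon \<sigma> a + perm_mon \<sigma> b"
  by (simp add: poly_mapping_eq_iff fun_eq_iff lookup_perm_mon' lookup_add)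

lemma perm_mon_zero: "perm_mon \<sigma> 0 = 0"
  by (simp add: poly_mapping_eq_iff fun_eq_iff lookup_perm_mon')

lemma perm_mon_comp: "perm_mon \<sigma> (perm_mon \<tau> m) = perm_mon (\<tau> \<circ> \<sigma>) m"
  by (simp add: poly_mapping_eq_iff fun_eq_iff lookup_perm_mon')

lemma perm_mon_id: "perm_mon id m = m"
  by (simp add: poly_mapping_eq_iff fun_eq_iff lookup_perm_mon')

lemma perm_mon_inv1: "\<sigma> permutes UNIV \<Longrightarrow> perm_mon \<sigma> (perm_mon (inv \<sigma>) m) = m"
  by (simp add: perm_mon_comp permutes_inv_o perm_mon_id)

lemma perm_mon_inv2: "\<sigma> permutes UNIV \<Longrightarrow> perm_mon (inv \<sigma>) (perm_mon \<sigma> m) = m"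
  by (simp add: perm_mon_comp permutes_inv_o perm_mon_id)

lemma perm_mon_tmon: "perm_mon \<sigma> (tmon e) = tmon (\<lambda>j i. e (\<sigma> j) i)"
  by (simp add: poly_mapping_eq_iff fun_eq_iff lookup_perm_mon' lookup_tmon')

definition act :: "('d \<Rightarrow> 'd) \<Rightarrow> ('d::finite, 'r::finite, 'a::comm_ring_1) tens \<Rightarrow> ('d, 'r, 'a) tens" where
  "act \<sigma> p = ext (\<lambda>E. Poly_Mapping.single (perm_mon (inv \<sigma>) E) 1) (Poly_Mapping.single 0) p"

lemma single0_hom:
  "Poly_Mapping.single 0 (0::'a::comm_ring_1) = 0"
  "\<And>a b. Poly_Mapping.single 0 (a + b) = Poly_Mapping.single 0 a + (Poly_Mapping.single 0 b :: 'k::monoid_add \<Rightarrow>\<^sub>0 'a)"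
  "\<And>a b. Poly_Mapping.single 0 (a * b) = Poly_Mapping.single 0 a * (Poly_Mapping.single 0 b :: 'k::monoid_add \<Rightarrow>\<^sub>0 'a)"
  by (simp_all add: single_add mult_single)

lemma act_single: "act \<sigma> (Poly_Mapping.single E c) = Poly_Mapping.single (perm_mon (inv \<sigma>) E) c"
  unfolding act_def by (simp add: ext_single mult_single)

lemma act_add: "act \<sigma> (p + q) = act \<sigma> p + act \<sigma> q"
  unfolding act_def by (rule ext_add) (simp_all add: single_add)

lemma act_mult: "act \<sigma> (p * q) = act \<sigma> p * act \<sigma> q"
  unfolding act_def by (rule ext_mult) (simp_all add: single_add mult_single perm_mon_add)

lemma lookup_act:
  assumes "\<sigma> permutes UNIV"
  shows "Poly_Mapping.lookup (act \<sigma> p) E = Poly_Mapping.lookup p (perm_mon \<sigma> E)"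
proof -
  have "act \<sigma> p = (\<Sum>x\<in>Poly_Mapping.keys p. Poly_Mapping.single (perm_mon (inv \<sigma>) x) (Poly_Mapping.lookup p x))"
    unfolding act_def ext_def by (simp add: mult_single)
  have eqv: "perm_mon (inv \<sigma>) x = E \<longleftrightarrow> x = perm_mon \<sigma> E" for x
    using perm_mon_inv1[OF assms, of x] perm_mon_inv2[OF assms, of E] by auto
  have "Poly_Mapping.lookup (act \<sigma> p) E = (\<Sum>x\<in>Poly_Mapping.keys p. Poly_Mapping.lookup (Poly_Mapping.single (perm_mon (inv \<sigma>) x) (Poly_Mapping.lookup p x)) E)"
    unfolding \<open>act \<sigma> p = _\<close> lookup_sum ..
  also have "\<dots> = (\<Sum>x\<in>Poly_Mapping.keys p. (Poly_Mapping.lookup p x when x = perm_mon \<sigma> E))"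
    by (rule sum.cong) (simp_all only: lookup_single eqv)
  also have "\<dots> = Poly_Mapping.lookup p (perm_mon \<sigma> E)"
    by (cases "perm_mon \<sigma> E \<in> Poly_Mapping.keys p") (auto simp: when_def in_keys_iff)
  finally show ?thesis by simp
qed


lemma symmetric_act: "symmetric p \<longleftrightarrow> (\<forall>\<sigma>. \<sigma> permutes UNIV \<longrightarrow> act \<sigma> p = p)"
  unfolding symmetric_def by (auto simp: poly_mapping_eq_iff fun_eq_iff lookup_act)

lemma act_sum: "act \<sigma> (\<Sum>i\<in>I. f i) = (\<Sum>i\<in>I. act \<sigma> (f i))"
  unfolding act_def by (rule ext_sum) (simp_all add: single_add)

lemma act_uminus: "act \<sigma> (- p) = - act \<sigma> p"
  unfolding act_def by (rule ext_uminus) (simp_all add: single_add)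

lemma act_diff: "act \<sigma> (p - q) = act \<sigma> p - act \<sigma> q"
  unfolding act_def by (rule ext_diff) (simp_all add: single_add)

lemma act_scalar: "act \<sigma> (Poly_Mapping.single 0 c) = Poly_Mapping.single 0 c"
  by (simp add: act_single perm_mon_zero)

lemma act_one: "act \<sigma> 1 = 1"
  using act_scalar[of \<sigma> 1] by simp

lemma act_of_int: "act \<sigma> (of_int c) = of_int c"
  using act_scalar[of \<sigma> "of_int c"] by simp

lemma act_of_nat: "act \<sigma> (of_nat c) = of_nat c"
  using act_scalar[of \<sigma> "of_nat c"] by simp

lemma act_power: "act \<sigma> (p ^ n) = act \<sigma> p ^ n"
  by (induction n) (simp_all add: act_one act_mult)

lemma sym_mult: "symmetric p \<Longrightarrow> symmetric q \<Longrightarrow> symmetric (p * q)"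
  by (simp add: symmetric_act act_mult)
lemma sym_add: "symmetric p \<Longrightarrow> symmetric q \<Longrightarrow> symmetric (p + q)"
  by (simp add: symmetric_act act_add)
lemma sym_diff: "symmetric p \<Longrightarrow> symmetric q \<Longrightarrow> symmetric (p - q)"
  by (simp add: symmetric_act act_diff)
lemma sym_scalar: "symmetric (Poly_Mapping.single 0 c)"
  by (simp add: symmetric_act act_scalar)
lemma sym_of_int: "symmetric (of_int c)"
  by (simp add: symmetric_act act_of_int)
lemma sym_of_nat: "symmetric (of_nat c)"
  by (simp add: symmetric_act act_of_nat)
lemma sym_power: "symmetric p \<Longrightarrow> symmetric (p ^ n)"
  by (simp add: symmetric_act act_power)
lemma sym_sum: "(\<And>i. i \<in> I \<Longrightarrow> symmetric (f i)) \<Longrightarrow> symmetric (\<Sum>i\<in>I. f i)"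
  by (simp add: symmetric_act act_sum)

lemma act_ptensor: "act \<sigma> (ptensor e) = ptensor (\<lambda>j i. e (inv \<sigma> j) i)"
  unfolding ptensor_def by (simp add: act_single perm_mon_tmon)

definition ind :: "'d set \<Rightarrow> ('r \<Rightarrow> nat) \<Rightarrow> 'd \<Rightarrow> 'r \<Rightarrow> nat" where
  "ind S \<beta> = (\<lambda>j. if j \<in> S then \<beta> else (\<lambda>_. 0))"

lemma gam_ind: "gam k \<beta> = (\<Sum>S \<in> {S. card S = k}. ptensor (ind S \<beta>))"
  unfolding gam_def ind_def ..

lemma sym_gam: "symmetric (gam k \<beta> :: ('d::finite,'r::finite,'a::comm_ring_1) tens)"
  unfolding symmetric_act
proof (intro allI impI)
  fix \<sigma> :: "'d \<Rightarrow> 'd" assume \<sigma>: "\<sigma> permutes UNIV"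
  have inj: "inj_on ((`) \<sigma>) {S. card S = k}"
    using \<sigma> by (meson inj_image_eq_iff inj_onI permutes_inj)
  have cs: "card (\<sigma> ` S) = card S" for S
    using \<sigma> by (meson card_image inj_on_subset permutes_inj subset_UNIV)
  have cs': "card (inv \<sigma> ` S) = card S" for S
    using permutes_inv[OF \<sigma>] by (meson card_image inj_on_subset permutes_inj subset_UNIV)
  have ii: "\<sigma> ` (inv \<sigma> ` S) = S" for S
    using permutes_inverses(1)[OF \<sigma>] by (simp add: image_image)
  have img: "(`) \<sigma> ` {S. card S = k} = {S. card S = k}"
  proof
    show "(`) \<sigma> ` {S. card S = k} \<subseteq> {S. card S = k}"
      using cs by auto
    show "{S. card S = k} \<subseteq> (`) \<sigma> ` {S. card S = k}"
    proof
      fix S :: "'d set" assume "S \<in> {S. card S = k}"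
      then have "inv \<sigma> ` S \<in> {S. card S = k}" using cs' by simp
      then show "S \<in> (`) \<sigma> ` {S. card S = k}" using ii[of S] by (metis image_eqI)
    qed
  qed
  have iff: "inv \<sigma> j \<in> S \<longleftrightarrow> j \<in> \<sigma> ` S" for S j
  proof
    assume "inv \<sigma> j \<in> S"
    then show "j \<in> \<sigma> ` S" using permutes_inverses(1)[OF \<sigma>, of j] by (metis image_eqI)
  next
    assume "j \<in> \<sigma> ` S"
    then obtain x where "x \<in> S" "j = \<sigma> x" by blast
    then show "inv \<sigma> j \<in> S" using permutes_inverses(2)[OF \<sigma>, of x] by simp
  qed
  have e: "(\<lambda>j i. ind S \<beta> (inv \<sigma> j) i) = ind (\<sigma> ` S) \<beta>" for S
    unfolding ind_def by (rule ext)+ (simp only: iff)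
  have "act \<sigma> (gam k \<beta> :: ('d,'r,'a) tens) = (\<Sum>S\<in>{S. card S = k}. ptensor (ind (\<sigma> ` S) \<beta>))"
    by (simp add: gam_ind act_sum act_ptensor e)
  also have "\<dots> = (\<Sum>S\<in>(`) \<sigma> ` {S. card S = k}. ptensor (ind S \<beta>))"
    by (simp add: sum.reindex[OF inj])
  also have "\<dots> = gam k \<beta>" by (simp add: img gam_ind)
  finally show "act \<sigma> (gam k \<beta> :: ('d,'r,'a) tens) = gam k \<beta>" .
qed


lemma mdeg_add: "mdeg (a + b) = (\<lambda>i. mdeg a i + mdeg b i)"
  by (simp add: mdeg_def fun_eq_iff lookup_add sum.distrib)

lemma homog_mult:
  assumes "homogeneous \<beta> p" "homogeneous \<gamma> q"
  shows "homogeneous (\<lambda>i. \<beta> i + \<gamma> i) (p * q)"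
  unfolding homogeneous_def
proof
  fix m assume "m \<in> Poly_Mapping.keys (p * q)"
  then obtain a b where ab: "a \<in> Poly_Mapping.keys p" "b \<in> Poly_Mapping.keys q" "m = a + b"
    using keys_mult[of p q] by blast
  then show "mdeg m = (\<lambda>i. \<beta> i + \<gamma> i)"
    using assms unfolding homogeneous_def by (simp add: mdeg_add)
qed

lemma homog_add: "homogeneous \<beta> p \<Longrightarrow> homogeneous \<beta> q \<Longrightarrow> homogeneous \<beta> (p + q)"
  unfolding homogeneous_def using keys_add[of p q] by blast

lemma homog_uminus: "homogeneous \<beta> p \<Longrightarrow> homogeneous \<beta> (- p)"
  unfolding homogeneous_def by (simp add: keys_minus)

lemma homog_diff: "homogeneous \<beta> p \<Longrightarrow> homogeneous \<beta> q \<Longrightarrow> homogeneous \<beta> (p - q)"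
  using homog_add[of \<beta> p "-q"] homog_uminus[of \<beta> q] by simp

lemma homog_scalar:
  assumes "homogeneous \<beta> p"
  shows "homogeneous \<beta> (Poly_Mapping.single 0 c * p)"
  unfolding homogeneous_def
proof
  fix m assume "m \<in> Poly_Mapping.keys (Poly_Mapping.single 0 c * p)"
  then obtain a b where ab: "a \<in> Poly_Mapping.keys (Poly_Mapping.single 0 c)" "b \<in> Poly_Mapping.keys p" "m = a + b"
    using keys_mult[of "Poly_Mapping.single 0 c" p] by blast
  have "a = 0" using ab(1) by (cases "c = 0") auto
  then show "mdeg m = \<beta>"
    using assms ab unfolding homogeneous_def by simp
qed

lemma homog_sum: "(\<And>i. i \<in> I \<Longrightarrow> homogeneous \<beta> (f i)) \<Longrightarrow> homogeneous \<beta> (\<Sum>i\<in>I. f i)"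
  unfolding homogeneous_def using keys_sum[of f I] by blast

lemma homog_ptensor: "homogeneous (\<lambda>i. \<Sum>j\<in>UNIV. e j i) (ptensor e)"
  unfolding homogeneous_def ptensor_def by (simp add: mdeg_tmon)

lemma homog_gam: "homogeneous (\<lambda>i. k * \<beta> i) (gam k \<beta> :: ('d::finite,'r::finite,'a::comm_ring_1) tens)"
  unfolding gam_ind
proof (rule homog_sum)
  fix S :: "'d set" assume "S \<in> {S. card S = k}"
  have app: "ind S \<beta> j i = (if j \<in> S then \<beta> i else 0)" for j i
    by (simp add: ind_def)
  from \<open>S \<in> _\<close> have "(\<lambda>i. \<Sum>j\<in>UNIV. ind S \<beta> j i) = (\<lambda>i. k * \<beta> i)"
    by (simp add: app fun_eq_iff sum.If_cases)
  then show "homogeneous (\<lambda>i. k * \<beta> i) (ptensor (ind S \<beta>) :: ('d,'r,'a) tens)"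
    using homog_ptensor[of "ind S \<beta>"] by simp
qed

lemma gam_zero_big: "card (UNIV :: 'd set) < k \<Longrightarrow> (gam k \<beta> :: ('d::finite, 'r::finite, 'a::comm_ring_1) tens) = 0"
proof -
  assume "card (UNIV :: 'd set) < k"
  moreover have "card S \<le> card (UNIV :: 'd set)" for S :: "'d set"
    by (rule card_mono) auto
  ultimately have "{S :: 'd set. card S = k} = {}"
    by (metis (mono_tags, lifting) empty_Collect_eq leD)
  then show ?thesis by (simp add: gam_ind)
qed

lemma ga_zero: "0 \<in> gen_alg G"
  using gen_alg.scalar[of 0 G] by simp
lemma ga_one: "1 \<in> gen_alg G"
  using gen_alg.scalar[of 1 G] by simp
lemma ga_scalar: "p \<in> gen_alg G \<Longrightarrow> Poly_Mapping.single 0 c * p \<in> gen_alg G"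
  by (rule gen_alg.mult[OF gen_alg.scalar])
lemma ga_uminus: "p \<in> gen_alg G \<Longrightarrow> - p \<in> gen_alg G"
  using ga_scalar[of p G "-1"] by (simp add: single_uminus)
lemma ga_diff: "p \<in> gen_alg G \<Longrightarrow> q \<in> gen_alg G \<Longrightarrow> p - q \<in> gen_alg G"
proof -
  assume a: "p \<in> gen_alg G" "q \<in> gen_alg G"
  have "p + - q \<in> gen_alg G" by (rule gen_alg.add[OF a(1) ga_uminus[OF a(2)]])
  then show ?thesis by simp
qed
lemma ga_sum: "(\<And>i. i \<in> I \<Longrightarrow> f i \<in> gen_alg G) \<Longrightarrow> (\<Sum>i\<in>I. f i) \<in> gen_alg G"
  by (induction I rule: infinite_finite_induct) (auto intro: ga_zero gen_alg.add)
lemma ga_of_int: "of_int c \<in> gen_alg G"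
  using gen_alg.scalar[of "of_int c" G] by simp
lemma ga_of_int_mult: "p \<in> gen_alg G \<Longrightarrow> of_int c * p \<in> gen_alg G"
  by (rule gen_alg.mult[OF ga_of_int])
lemma ga_of_nat_mult: "p \<in> gen_alg G \<Longrightarrow> of_nat c * p \<in> gen_alg G"
  using ga_of_int_mult[of p G "int c"] by simp


context
  fixes z :: "'d::finite \<Rightarrow> 'b::comm_ring_1"
begin

definition el :: "nat \<Rightarrow> 'b" where "el i = (\<Sum>S\<in>{S. card S = i}. \<Prod>l\<in>S. z l)"
definition pw :: "nat \<Rightarrow> 'b" where "pw a = (\<Sum>l\<in>UNIV. z l ^ a)"
definition QQ :: "nat \<Rightarrow> nat \<Rightarrow> 'b" where
  "QQ i a = (\<Sum>S\<in>{S. card S = i}. \<Sum>l\<in>-S. (\<Prod>l\<in>S. z l) * z l ^ a)"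
definition RR :: "nat \<Rightarrow> nat \<Rightarrow> 'b" where
  "RR i a = (\<Sum>S\<in>{S. card S = i}. \<Sum>l\<in>S. (\<Prod>l\<in>S. z l) * z l ^ a)"

lemma split_univ: "(\<Sum>l\<in>UNIV. g l) = (\<Sum>l\<in>-S. g l) + (\<Sum>l\<in>(S::'d set). g l)"
proof -
  have "(\<Sum>l\<in>-S \<union> S. g l) = (\<Sum>l\<in>-S. g l) + (\<Sum>l\<in>S. g l)" by (rule sum.union_disjoint) auto
  moreover have "-S \<union> S = UNIV" by auto
  ultimately show ?thesis by simp
qed

lemma el_pw: "el i * pw a = QQ i a + RR i a"
proof -
  have "el i * pw a = (\<Sum>S\<in>{S. card S = i}. \<Sum>l\<in>UNIV. (\<Prod>l\<in>S. z l) * z l ^ a)"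
    by (simp add: el_def pw_def sum_product)
  also have "\<dots> = QQ i a + RR i a"
    unfolding QQ_def RR_def sum.distrib[symmetric]
    by (rule sum.cong, simp, rule split_univ)
  finally show ?thesis .
qed

lemma RR_0: "RR 0 a = 0"
proof -
  have "{S :: 'd set. card S = 0} = {{}}" by auto
  then show ?thesis by (simp add: RR_def)
qed

lemma RR_Suc: "RR (Suc i) a = QQ i (Suc a)"
proof -
  let ?A = "Sigma {S :: 'd set. card S = i} (\<lambda>S. -S)"
  let ?B = "Sigma {S :: 'd set. card S = Suc i} (\<lambda>S. S)"
  have bij: "bij_betw (\<lambda>(S, l). (insert l S, l)) ?A ?B"
  proof (rule bij_betw_byWitness[where f'="\<lambda>(S,l). (S - {l}, l)"])
    show "\<forall>x\<in>?A. (\<lambda>(S, l). (S - {l}, l)) ((\<lambda>(S, l). (insert l S, l)) x) = x" by auto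
    show "\<forall>x\<in>?B. (\<lambda>(S, l). (insert l S, l)) ((\<lambda>(S, l). (S - {l}, l)) x) = x" by auto
    show "(\<lambda>(S, l). (insert l S, l)) ` ?A \<subseteq> ?B" by auto
    show "(\<lambda>(S, l). (S - {l}, l)) ` ?B \<subseteq> ?A" by (auto simp: card_Diff_singleton)
  qed
  have "RR (Suc i) a = (\<Sum>(S,l)\<in>?B. (\<Prod>l\<in>S. z l) * z l ^ a)"
    unfolding RR_def by (rule sum.Sigma) auto
  also have "\<dots> = (\<Sum>x\<in>?A. (\<lambda>(S,l). (\<Prod>l\<in>S. z l) * z l ^ a) ((\<lambda>(S, l). (insert l S, l)) x))"
    by (rule sum.reindex_bij_betw[OF bij, symmetric])
  also have "\<dots> = (\<Sum>(S,l)\<in>?A. (\<Prod>l\<in>insert l S. z l) * z l ^ a)"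
    by (rule sum.cong) auto
  also have "\<dots> = (\<Sum>(S,l)\<in>?A. (\<Prod>l\<in>S. z l) * z l ^ Suc a)"
    by (rule sum.cong) (auto simp: mult_ac)
  also have "\<dots> = QQ i (Suc a)"
    unfolding QQ_def by (rule sum.Sigma[symmetric]) auto
  finally show ?thesis .
qed

lemma RR_0pow: "RR i 0 = of_nat i * el i"
  unfolding RR_def el_def sum_distrib_left by (rule sum.cong) auto

lemma newton_partial:
  assumes "t < j"
  shows "(\<Sum>i\<le>t. (-1)^i * el i * pw (j - i)) = (-1)^t * QQ t (j - t)"
  using assms
proof (induction t)
  case 0 then show ?case by (simp add: el_pw RR_0)
next
  case (Suc t)
  have e: "Suc (j - Suc t) = j - t" using Suc.prems by simp
  have IH: "(\<Sum>i\<le>t. (-1)^i * el i * pw (j - i)) = (-1)^t * QQ t (j - t)"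
    using Suc by simp
  have "(\<Sum>i\<le>Suc t. (-1)^i * el i * pw (j - i)) = (\<Sum>i\<le>t. (-1)^i * el i * pw (j - i)) + (-1)^Suc t * (el (Suc t) * pw (j - Suc t))"
    by (simp add: mult.assoc)
  also have "\<dots> = (-1)^t * QQ t (j - t) + (-1)^Suc t * (QQ (Suc t) (j - Suc t) + RR (Suc t) (j - Suc t))"
    by (simp only: IH el_pw)
  also have "\<dots> = (-1)^Suc t * QQ (Suc t) (j - Suc t)"
    by (simp add: RR_Suc e algebra_simps)
  finally show ?case .
qed

lemma newton:
  assumes "0 < j"
  shows "(\<Sum>i<j. (-1)^i * el i * pw (j - i)) = (-1)^(j-1) * of_nat j * el j"
proof -
  have "{..<j} = {..j-1}" using assms by auto
  then have "(\<Sum>i<j. (-1)^i * el i * pw (j - i)) = (-1)^(j-1) * QQ (j-1) (j - (j-1))"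
    using newton_partial[of "j-1" j] assms by simp
  also have "QQ (j-1) (j - (j-1)) = of_nat j * el j"
    using RR_Suc[of "j-1" 0] RR_0pow[of j] assms by simp
  finally show ?thesis by (simp add: mult_ac)
qed

end

lemma gen_in_GL:
  assumes "symmetric p" "homogeneous \<beta> p" "\<beta> < \<gamma>"
  shows "p \<in> Gamma_less \<gamma>"
  unfolding Gamma_less_def by (rule gen_alg.gen) (use assms in blast)

lemma less_fun_scale:
  fixes \<beta> :: "'r \<Rightarrow> nat"
  assumes "a < b" "\<beta> x \<noteq> 0"
  shows "(\<lambda>i. a * \<beta> i) < (\<lambda>i. b * \<beta> i)"
proof -
  have "(\<lambda>i. a * \<beta> i) \<le> (\<lambda>i. b * \<beta> i)"
    using assms by (simp add: le_fun_def)
  moreover have "\<not> (\<lambda>i. b * \<beta> i) \<le> (\<lambda>i. a * \<beta> i)"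
    using assms by (auto simp: le_fun_def intro!: exI[of _ x])
  ultimately show ?thesis by (simp add: less_fun_def)
qed

lemma ind_single_sum: "(\<Sum>l\<in>S. ind {l} \<beta> j i) = ind (S :: 'd::finite set) \<beta> j i"
proof -
  have "(\<Sum>l\<in>S. ind {l} \<beta> j i) = (\<Sum>l\<in>S. if l = j then \<beta> i else 0)"
    by (rule sum.cong) (auto simp: ind_def)
  also have "\<dots> = (if j \<in> S then \<beta> i else 0)" by (simp add: sum.delta)
  also have "\<dots> = ind S \<beta> j i" by (simp add: ind_def)
  finally show ?thesis .
qed

lemma el_gam: "el (\<lambda>l. ptensor (ind {l} \<beta>)) i = (gam i \<beta> :: ('d::finite,'r::finite,'a::comm_ring_1) tens)"
  unfolding el_def gam_ind
  by (rule sum.cong) (simp_all add: prod_ptensor ind_single_sum)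

lemma sum_card1: "(\<Sum>S\<in>{S :: 'd::finite set. card S = 1}. f S) = (\<Sum>l\<in>UNIV. f {l})"
proof -
  have "{S :: 'd set. card S = 1} = (\<lambda>l. {l}) ` UNIV"
    by (auto simp: card_1_singleton_iff)
  moreover have "inj (\<lambda>l::'d. {l})" by (auto intro: injI)
  ultimately show ?thesis by (simp add: sum.reindex)
qed

lemma pw_gam: "pw (\<lambda>l. ptensor (ind {l} \<beta>)) a = (gam 1 (\<lambda>i. a * \<beta> i) :: ('d::finite,'r::finite,'a::comm_ring_1) tens)"
proof -
  have "ind {l} (\<lambda>i. a * \<beta> i) = (\<lambda>j i. a * ind {l} \<beta> j i)" for l
    by (simp add: ind_def fun_eq_iff)
  note e = this
  have "pw (\<lambda>l. ptensor (ind {l} \<beta>)) a = (\<Sum>l\<in>UNIV. ptensor (\<lambda>j i. a * ind {l} \<beta> j i) :: ('d,'r,'a) tens)"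
    unfolding pw_def by (simp add: ptensor_power)
  also have "\<dots> = (\<Sum>l\<in>UNIV. ptensor (ind {l} (\<lambda>i. a * \<beta> i)))"
    by (simp only: e)
  also have "\<dots> = gam 1 (\<lambda>i. a * \<beta> i)"
    unfolding gam_ind sum_card1 ..
  finally show ?thesis .
qed

lemma gam_0: "(gam 0 \<beta> :: ('d::finite,'r::finite,'a::comm_ring_1) tens) = 1"
proof -
  have "{S :: 'd set. card S = 0} = {{}}" by (auto simp: card_eq_0_iff)
  moreover have "ind ({} :: 'd set) \<beta> = (\<lambda>_ _. 0)" by (simp add: ind_def fun_eq_iff)
  ultimately show ?thesis by (simp add: gam_ind ptensor_zero)
qed

lemma newton_gam:
  assumes "0 < j"
  shows "(\<Sum>i<j. (-1)^i * gam i \<beta> * gam 1 (\<lambda>x. (j - i) * \<beta> x)) =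
    (-1)^(j-1) * of_nat j * (gam j \<beta> :: ('d::finite,'r::finite,'a::comm_ring_1) tens)"
  using newton[OF assms, of "\<lambda>l. ptensor (ind {l} \<beta>) :: ('d,'r,'a) tens"]
  by (simp add: el_gam pw_gam)

lemma newton_GL:
  fixes \<beta> :: "'r::finite \<Rightarrow> nat"
  assumes "0 < j" "\<beta> x \<noteq> 0"
  shows "(gam 1 (\<lambda>i. j * \<beta> i) :: ('d::finite,'r,'a::comm_ring_1) tens)
           - (-1)^(j-1) * of_nat j * gam j \<beta> \<in> Gamma_less (\<lambda>i. j * \<beta> i)"
proof -
  let ?t = "\<lambda>i. (-1)^i * gam i \<beta> * gam 1 (\<lambda>x. (j - i) * \<beta> x) :: ('d,'r,'a) tens"
  have split: "{..<j} = insert 0 {1..<j}" using assms by auto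
  have "(\<Sum>i<j. ?t i) = ?t 0 + (\<Sum>i\<in>{1..<j}. ?t i)"
    unfolding split by (subst sum.insert) auto
  also have "?t 0 = gam 1 (\<lambda>i. j * \<beta> i)" by (simp add: gam_0)
  finally have s1: "(\<Sum>i<j. ?t i) = gam 1 (\<lambda>i. j * \<beta> i) + (\<Sum>i\<in>{1..<j}. ?t i)" .
  have s2: "(\<Sum>i<j. ?t i) = (-1)^(j-1) * of_nat j * gam j \<beta>"
    by (rule newton_gam[OF assms(1)])
  have eq: "gam 1 (\<lambda>i. j * \<beta> i) - (-1)^(j-1) * of_nat j * gam j \<beta> = - (\<Sum>i\<in>{1..<j}. ?t i)"
    unfolding s2[symmetric] s1 by simp
  have "?t i \<in> Gamma_less (\<lambda>i. j * \<beta> i)" if "i \<in> {1..<j}" for i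
  proof -
    have g1: "(gam i \<beta> :: ('d,'r,'a) tens) \<in> Gamma_less (\<lambda>i. j * \<beta> i)"
      by (rule gen_in_GL[OF sym_gam homog_gam less_fun_scale]) (use that assms in auto)
    have h2: "homogeneous (\<lambda>x. (j - i) * \<beta> x) (gam 1 (\<lambda>x. (j - i) * \<beta> x) :: ('d,'r,'a) tens)"
      using homog_gam[of 1 "\<lambda>x. (j - i) * \<beta> x"] by simp
    have g2: "(gam 1 (\<lambda>x. (j - i) * \<beta> x) :: ('d,'r,'a) tens) \<in> Gamma_less (\<lambda>i. j * \<beta> i)"
      by (rule gen_in_GL[OF sym_gam h2], rule less_fun_scale) (use that assms in auto)
    have "(gam i \<beta> * gam 1 (\<lambda>x. (j - i) * \<beta> x) :: ('d,'r,'a) tens) \<in> Gamma_less (\<lambda>i. j * \<beta> i)"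
      using gen_alg.mult[OF g1[unfolded Gamma_less_def] g2[unfolded Gamma_less_def]]
      unfolding Gamma_less_def .
    then have "(of_int ((-1)^i) * (gam i \<beta> * gam 1 (\<lambda>x. (j - i) * \<beta> x)) :: ('d,'r,'a) tens) \<in> Gamma_less (\<lambda>i. j * \<beta> i)"
      unfolding Gamma_less_def by (rule ga_of_int_mult)
    then show ?thesis by (simp add: mult.assoc)
  qed
  then have "(\<Sum>i\<in>{1..<j}. ?t i) \<in> Gamma_less (\<lambda>i. j * \<beta> i)"
    unfolding Gamma_less_def by (rule ga_sum)
  then show ?thesis unfolding eq Gamma_less_def by (rule ga_uminus)
qed


lemma count_image_mset_set:
  assumes "finite A"
  shows "count (image_mset f (mset_set A)) b = card (A \<inter> f -` {b})"
proof -
  have "count (image_mset f (mset_set A)) b = (\<Sum>y\<in>f -` {b} \<inter> A. 1)"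
    unfolding count_image_mset using assms by (intro sum.cong) auto
  then show ?thesis by (simp add: Int_commute)
qed

lemma setperm:
  assumes "finite A" "X \<subseteq> A" "Y \<subseteq> A" "card X = card Y"
  shows "\<exists>p. p permutes A \<and> (\<forall>x\<in>A. (x \<in> X) = (p x \<in> Y))"
proof -
  have fX: "finite X" "finite Y" using assms finite_subset by auto
  have "image_mset (\<lambda>x. x \<in> X) (mset_set A) = image_mset (\<lambda>x. x \<in> Y) (mset_set A)"
  proof (rule multiset_eqI)
    fix b :: bool
    show "count (image_mset (\<lambda>x. x \<in> X) (mset_set A)) b = count (image_mset (\<lambda>x. x \<in> Y) (mset_set A)) b"
    proof (cases b)
      case True
      then have "A \<inter> (\<lambda>x. x \<in> X) -` {b} = X" "A \<inter> (\<lambda>x. x \<in> Y) -` {b} = Y" using assms by auto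
      then show ?thesis using assms by (simp add: count_image_mset_set)
    next
      case False
      then have "A \<inter> (\<lambda>x. x \<in> X) -` {b} = A - X" "A \<inter> (\<lambda>x. x \<in> Y) -` {b} = A - Y" by auto
      then show ?thesis using assms fX by (simp add: count_image_mset_set card_Diff_subset)
    qed
  qed
  then obtain p where "p permutes A" "\<forall>x\<in>A. (x \<in> X) = (p x \<in> Y)"
    using image_mset_eq_implies_permutes[OF assms(1)] by metis
  then show ?thesis by blast
qed

lemma perm_lemma:
  fixes u w :: "'d::finite \<Rightarrow> nat"
  assumes \<pi>: "\<pi> permutes UNIV"
    and cw: "card {j. w j \<noteq> 0} = card {j. u j \<noteq> 0}"
    and r: "\<And>j. w j - 1 = u (\<pi> j) - 1"
  shows "\<exists>\<sigma>. \<sigma> permutes UNIV \<and> (\<forall>j. w j = u (\<sigma> j))"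
proof -
  define K where "K = {j. w j - 1 \<noteq> 0}"
  define X where "X = {j. w j \<noteq> 0}"
  define Y where "Y = {j. u (\<pi> j) \<noteq> 0}"
  have imY: "\<pi> ` Y = {j. u j \<noteq> 0}"
  proof
    show "\<pi> ` Y \<subseteq> {j. u j \<noteq> 0}" by (auto simp: Y_def)
    show "{j. u j \<noteq> 0} \<subseteq> \<pi> ` Y"
    proof
      fix x assume "x \<in> {j. u j \<noteq> 0}"
      then have "inv \<pi> x \<in> Y" "x = \<pi> (inv \<pi> x)"
        using permutes_inverses(1)[OF \<pi>] by (auto simp: Y_def)
      then show "x \<in> \<pi> ` Y" by blast
    qed
  qed
  have cY: "card Y = card X"
    using card_image[OF inj_on_subset[OF permutes_inj[OF \<pi>] subset_UNIV, of Y]] imY cw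
    by (simp add: X_def)
  have KX: "K \<subseteq> X" by (auto simp: K_def X_def)
  have KY: "K \<subseteq> Y" using r by (auto simp: K_def Y_def)
  have c': "card (X - K) = card (Y - K)"
    using cY KX KY by (simp add: card_Diff_subset)
  obtain p where p: "p permutes (-K)" "\<forall>x\<in>-K. (x \<in> X - K) = (p x \<in> Y - K)"
    using setperm[of "-K" "X - K" "Y - K"] c' by auto
  have pU: "p permutes UNIV" using p(1) by (rule permutes_subset) simp
  have ww: "w j = (w j - 1) + (if j \<in> X then 1 else 0)" for j by (simp add: X_def)
  have uu: "u (\<pi> j) = (w j - 1) + (if j \<in> Y then 1 else 0)" for j
    using r[of j] by (simp add: Y_def)
  have "w j = u (\<pi> (p j))" for j
  proof (cases "j \<in> K")
    case True
    then have "p j = j" using p(1) by (simp add: permutes_not_in)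
    then show ?thesis using True KX KY ww[of j] uu[of j] by auto
  next
    case False
    then have "p j \<notin> K" using p(1) by (metis ComplD ComplI permutes_in_image)
    then have "w (p j) - 1 = 0" "w j - 1 = 0" using False by (auto simp: K_def)
    then show ?thesis using ww[of j] uu[of "p j"] p(2) False \<open>p j \<notin> K\<close> by auto
  qed
  then show ?thesis using permutes_compose[OF pU \<pi>] by (metis comp_apply)
qed


definition vec :: "(('d \<times> unit) \<Rightarrow>\<^sub>0 nat) \<Rightarrow> 'd \<Rightarrow> nat" where
  "vec E j = Poly_Mapping.lookup E (j, ())"

definition vsupp :: "(('d \<times> unit) \<Rightarrow>\<^sub>0 nat) \<Rightarrow> 'd set" where
  "vsupp E = {j. vec E j \<noteq> 0}"

lemma tmon_vec: "tmon (\<lambda>j _. vec E j) = (E :: ('d::finite \<times> unit) \<Rightarrow>\<^sub>0 nat)"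
proof -
  have "(\<lambda>j (i::unit). Poly_Mapping.lookup E (j, i)) = (\<lambda>j _. vec E j)"
    by (auto simp: fun_eq_iff vec_def)
  then show ?thesis using tmon_lookup[of E] by simp
qed

lemma vec_tmon: "vec (tmon (\<lambda>j (_::unit). u j) :: ('d::finite \<times> unit) \<Rightarrow>\<^sub>0 nat) = u"
  by (simp add: vec_def lookup_tmon fun_eq_iff)

lemma tmon_unit_eq: "tmon e = (E :: ('d::finite \<times> unit) \<Rightarrow>\<^sub>0 nat) \<longleftrightarrow> (\<forall>j. e j () = vec E j)"
proof -
  have "tmon e = E \<longleftrightarrow> tmon e = tmon (\<lambda>j _. vec E j)" by (simp add: tmon_vec)
  also have "\<dots> \<longleftrightarrow> e = (\<lambda>j _. vec E j)" by (rule tmon_inj)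
  also have "\<dots> \<longleftrightarrow> (\<forall>j. e j () = vec E j)" by (auto simp: fun_eq_iff)
  finally show ?thesis .
qed

lemma vec_eq_iff: "(E :: ('d::finite \<times> unit) \<Rightarrow>\<^sub>0 nat) = E' \<longleftrightarrow> vec E = vec E'"
  by (metis tmon_vec)

lemma mdeg_unit: "mdeg (E :: ('d::finite \<times> unit) \<Rightarrow>\<^sub>0 nat) = (\<lambda>_. \<Sum>j\<in>UNIV. vec E j)"
  by (simp add: mdeg_def vec_def fun_eq_iff)

lemma homog_unit: "homogeneous (\<lambda>_. n) (f :: ('d::finite, unit, 'a::comm_ring_1) tens) \<longleftrightarrow>
    (\<forall>E\<in>Poly_Mapping.keys f. (\<Sum>j\<in>UNIV. vec E j) = n)"
  unfolding homogeneous_def mdeg_unit by (simp add: fun_eq_iff)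

lemma lookup_ptensor: "Poly_Mapping.lookup (ptensor e) E = (if tmon e = E then 1 else 0)"
  by (simp add: ptensor_def lookup_single when_def)

lemma lookup_sum_ptensor:
  assumes "finite X"
  shows "Poly_Mapping.lookup (\<Sum>x\<in>X. (ptensor (F x) :: ('d::finite,'r::finite,'a::comm_ring_1) tens)) E
     = of_nat (card {x\<in>X. tmon (F x) = E})"
proof -
  have "Poly_Mapping.lookup (\<Sum>x\<in>X. (ptensor (F x) :: ('d,'r,'a) tens)) E = (\<Sum>x\<in>X. if tmon (F x) = E then 1 else 0)"
    by (simp add: lookup_sum lookup_ptensor)
  also have "\<dots> = of_nat (card (X \<inter> {x. tmon (F x) = E}))"
    using assms by (simp add: sum.If_cases)
  also have "X \<inter> {x. tmon (F x) = E} = {x\<in>X. tmon (F x) = E}" by auto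
  finally show ?thesis by simp
qed

lemma lookup_scalar: "Poly_Mapping.lookup (Poly_Mapping.single 0 c * p) k = c * Poly_Mapping.lookup p k"
  by (simp add: mult_map_scale_conv_mult[symmetric] map.rep_eq when_def)

lemma keys_scalar: "Poly_Mapping.keys (Poly_Mapping.single 0 c * p) \<subseteq> Poly_Mapping.keys p"
  by (auto simp: in_keys_iff lookup_scalar)

lemma keys_diff': "Poly_Mapping.keys (p - q) \<subseteq> Poly_Mapping.keys p \<union> Poly_Mapping.keys (q :: 'k \<Rightarrow>\<^sub>0 'b::ab_group_add)"
  by (auto simp: in_keys_iff lookup_minus)

lemma sym_lookup:
  assumes "symmetric (f :: ('d::finite, unit, 'a::comm_ring_1) tens)" "\<sigma> permutes UNIV"
    "\<And>j. vec E' j = vec E (\<sigma> j)"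
  shows "Poly_Mapping.lookup f E' = Poly_Mapping.lookup f E"
proof -
  have "E' = perm_mon \<sigma> E"
    unfolding vec_eq_iff using assms(3) by (simp add: fun_eq_iff vec_def lookup_perm_mon)
  then show ?thesis using assms(1,2) unfolding symmetric_def by simp
qed

lemma sum_minus_one:
  fixes w :: "'d::finite \<Rightarrow> nat"
  shows "(\<Sum>j\<in>UNIV. w j) = (\<Sum>j\<in>UNIV. w j - 1) + card {j. w j \<noteq> 0}"
proof -
  have "(\<Sum>j\<in>UNIV. w j) = (\<Sum>j\<in>UNIV. (w j - 1) + (if w j \<noteq> 0 then 1 else 0))"
    by (rule sum.cong) auto
  also have "\<dots> = (\<Sum>j\<in>UNIV. w j - 1) + (\<Sum>j\<in>UNIV. if w j \<noteq> 0 then 1 else 0)"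
    by (rule sum.distrib)
  also have "(\<Sum>j\<in>UNIV. if w j \<noteq> 0 then (1::nat) else 0) = card {j. w j \<noteq> 0}"
    by (simp add: sum.If_cases)
  finally show ?thesis .
qed

definition orb :: "('d \<Rightarrow> nat) \<Rightarrow> ('d \<Rightarrow> nat) set" where
  "orb \<mu> = (\<lambda>\<pi>. \<mu> \<circ> \<pi>) ` {\<pi>. \<pi> permutes (UNIV :: 'd set)}"

lemma finite_orb: "finite (orb (\<mu> :: 'd::finite \<Rightarrow> nat))"
  unfolding orb_def by (rule finite_imageI, rule finite_permutations) simp

lemma orb_self: "\<mu> \<in> orb \<mu>"
  unfolding orb_def by (rule image_eqI[where x=id]) auto

definition Mo :: "('d::finite \<Rightarrow> nat) \<Rightarrow> ('d, unit, 'a::comm_ring_1) tens" where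
  "Mo \<mu> = (\<Sum>v\<in>orb \<mu>. ptensor (\<lambda>j _. v j))"

lemma sym_Mo: "symmetric (Mo \<mu> :: ('d::finite, unit, 'a::comm_ring_1) tens)"
  unfolding symmetric_act
proof (intro allI impI)
  fix \<sigma> :: "'d \<Rightarrow> 'd" assume \<sigma>: "\<sigma> permutes UNIV"
  let ?h = "\<lambda>v. v \<circ> inv \<sigma>"
  have inj: "inj_on ?h (orb \<mu>)"
  proof (rule inj_onI)
    fix v w :: "'d \<Rightarrow> nat" assume "?h v = ?h w"
    then have "v (inv \<sigma> (\<sigma> x)) = w (inv \<sigma> (\<sigma> x))" for x by (metis comp_apply)
    then show "v = w" using permutes_inverses(2)[OF \<sigma>] by auto
  qed
  have img: "?h ` orb \<mu> = orb \<mu>"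
  proof
    show "?h ` orb \<mu> \<subseteq> orb \<mu>"
      unfolding orb_def using permutes_compose[OF permutes_inv[OF \<sigma>]]
      by (auto simp: comp_assoc)
    show "orb \<mu> \<subseteq> ?h ` orb \<mu>"
    proof
      fix v assume "v \<in> orb \<mu>"
      then obtain \<pi> where \<pi>: "\<pi> permutes UNIV" "v = \<mu> \<circ> \<pi>" unfolding orb_def by auto
      then have "\<mu> \<circ> (\<pi> \<circ> \<sigma>) \<in> orb \<mu>" unfolding orb_def using permutes_compose[OF \<sigma> \<pi>(1)] by auto
      moreover have "v = ?h (\<mu> \<circ> (\<pi> \<circ> \<sigma>))"
        using \<pi>(2) permutes_inv_o(1)[OF \<sigma>] by (simp add: comp_assoc)
      ultimately show "v \<in> ?h ` orb \<mu>" by blast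
    qed
  qed
  have "act \<sigma> (Mo \<mu> :: ('d, unit, 'a) tens) = (\<Sum>v\<in>orb \<mu>. ptensor (\<lambda>j _. (?h v) j))"
    unfolding Mo_def by (simp add: act_sum act_ptensor)
  also have "\<dots> = (\<Sum>v\<in>?h ` orb \<mu>. ptensor (\<lambda>j _. v j))"
    by (simp add: sum.reindex[OF inj])
  also have "\<dots> = Mo \<mu>" by (simp add: img Mo_def)
  finally show "act \<sigma> (Mo \<mu> :: ('d, unit, 'a) tens) = Mo \<mu>" .
qed

lemma homog_Mo: "homogeneous (\<lambda>_. \<Sum>j\<in>UNIV. \<mu> j) (Mo \<mu> :: ('d::finite, unit, 'a::comm_ring_1) tens)"
  unfolding Mo_def
proof (rule homog_sum)
  fix v assume "v \<in> orb \<mu>"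
  then obtain \<pi> where \<pi>: "\<pi> permutes UNIV" "v = \<mu> \<circ> \<pi>" unfolding orb_def by auto
  have "(\<Sum>j\<in>UNIV. v j) = (\<Sum>j\<in>UNIV. \<mu> j)"
    using sum.permute[OF \<pi>(1), of \<mu>] \<pi>(2) by simp
  then show "homogeneous (\<lambda>_. \<Sum>j\<in>UNIV. \<mu> j) (ptensor (\<lambda>j _. v j) :: ('d, unit, 'a) tens)"
    using homog_ptensor[of "\<lambda>j (_::unit). v j"] by simp
qed


lemma gamMo_expand:
  "(gam l (\<lambda>_. 1) * Mo \<mu> :: ('d::finite, unit, 'a::comm_ring_1) tens)
     = (\<Sum>x\<in>{S. card S = l} \<times> orb \<mu>. ptensor (\<lambda>j i. ind (fst x) (\<lambda>_. 1) j i + snd x j))"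
  unfolding gam_ind Mo_def sum_product
  by (simp add: ptensor_mult sum.cartesian_product case_prod_beta)

lemma ind_unit: "ind S \<beta> j () = (if j \<in> S then \<beta> () else 0)"
  by (simp add: ind_def)

lemma keys_gamMo:
  assumes "E \<in> Poly_Mapping.keys (gam l (\<lambda>_. 1) * Mo \<mu> :: ('d::finite, unit, 'a::comm_ring_1) tens)"
  shows "l \<le> card (vsupp E)"
proof -
  let ?X = "{S :: 'd set. card S = l} \<times> orb \<mu>"
  have "of_nat (card {x\<in>?X. tmon (\<lambda>j i. ind (fst x) (\<lambda>_. 1) j i + snd x j) = E}) \<noteq> (0::'a)"
    using assms unfolding gamMo_expand in_keys_iff
    by (subst (asm) lookup_sum_ptensor) (simp_all add: finite_orb)
  then have "{x\<in>?X. tmon (\<lambda>j i. ind (fst x) (\<lambda>_. 1) j i + snd x j) = E} \<noteq> {}"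
    by (metis card.empty of_nat_0)
  then obtain S v where Sv: "card S = l" "tmon (\<lambda>j i. ind S (\<lambda>_. 1) j i + v j) = E" by auto
  then have h: "\<forall>j. ind S (\<lambda>_. 1) j () + v j = vec E j"
    unfolding tmon_unit_eq by blast
  have "S \<subseteq> vsupp E"
  proof
    fix j assume "j \<in> S"
    then have "vec E j = Suc (v j)" using h[rule_format, of j, symmetric] by (simp add: ind_unit)
    then show "j \<in> vsupp E" by (simp add: vsupp_def)
  qed
  then have "card S \<le> card (vsupp E)" by (intro card_mono) simp_all
  then show ?thesis using Sv(1) by simp
qed

lemma lookup_gamMo:
  assumes "card (vsupp E) = l"
  shows "Poly_Mapping.lookup (gam l (\<lambda>_. 1) * Mo \<mu> :: ('d::finite, unit, 'a::comm_ring_1) tens) E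
      = (if (\<lambda>j. vec E j - 1) \<in> orb \<mu> then 1 else 0)"
proof -
  let ?X = "{S :: 'd set. card S = l} \<times> orb \<mu>"
  let ?T = "{x\<in>?X. tmon (\<lambda>j i. ind (fst x) (\<lambda>_. 1) j i + snd x j) = E}"
  have T: "?T = (if (\<lambda>j. vec E j - 1) \<in> orb \<mu> then {(vsupp E, \<lambda>j. vec E j - 1)} else {})"
  proof -
    have "x \<in> ?T \<longleftrightarrow> x = (vsupp E, \<lambda>j. vec E j - 1) \<and> (\<lambda>j. vec E j - 1) \<in> orb \<mu>" for x
    proof (cases x)
      case (Pair S v)
      have "(S, v) \<in> ?T \<longleftrightarrow> card S = l \<and> v \<in> orb \<mu> \<and> (\<forall>j. (if j \<in> S then 1 else 0) + v j = vec E j)"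
        by (simp add: tmon_unit_eq ind_unit)
      also have "\<dots> \<longleftrightarrow> S = vsupp E \<and> v = (\<lambda>j. vec E j - 1) \<and> (\<lambda>j. vec E j - 1) \<in> orb \<mu>"
      proof
        assume h: "card S = l \<and> v \<in> orb \<mu> \<and> (\<forall>j. (if j \<in> S then 1 else 0) + v j = vec E j)"
        have hj: "(if j \<in> S then 1 else 0) + v j = vec E j" for j using h by blast
        have sub: "S \<subseteq> vsupp E"
        proof
          fix j assume "j \<in> S"
          then have "vec E j = Suc (v j)" using hj[of j, symmetric] by simp
          then show "j \<in> vsupp E" by (simp add: vsupp_def)
        qed
        then have Seq: "S = vsupp E" using h assms by (intro card_subset_eq) auto
        have "v j = vec E j - 1" for j
        proof (cases "j \<in> S")
          case True then show ?thesis using hj[of j] by simp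
        next
          case False
          then have "vec E j = 0" using Seq by (simp add: vsupp_def)
          then show ?thesis using hj[of j] False by simp
        qed
        then have "v = (\<lambda>j. vec E j - 1)" by auto
        then show "S = vsupp E \<and> v = (\<lambda>j. vec E j - 1) \<and> (\<lambda>j. vec E j - 1) \<in> orb \<mu>"
          using Seq h by simp
      next
        assume "S = vsupp E \<and> v = (\<lambda>j. vec E j - 1) \<and> (\<lambda>j. vec E j - 1) \<in> orb \<mu>"
        then show "card S = l \<and> v \<in> orb \<mu> \<and> (\<forall>j. (if j \<in> S then 1 else 0) + v j = vec E j)"
          using assms by (auto simp: vsupp_def)
      qed
      finally show ?thesis using Pair by simp
    qed
    then show ?thesis by auto
  qed
  have fin: "finite ?X" by (simp add: finite_orb)
  show ?thesis
    unfolding gamMo_expand lookup_sum_ptensor[OF fin] T by simp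
qed

definition good :: "nat \<Rightarrow> nat \<Rightarrow> ('d::finite, unit, 'a::comm_ring_1) tens \<Rightarrow> bool" where
  "good n l f \<longleftrightarrow> symmetric f \<and> homogeneous (\<lambda>_. n) f \<and> (\<forall>E\<in>Poly_Mapping.keys f. l \<le> card (vsupp E))"

lemma less_const_fun:
  assumes "(a::nat) < b" shows "(\<lambda>_::unit. a) < (\<lambda>_::unit. b)"
proof -
  have "(\<lambda>_::unit. a) \<le> (\<lambda>_. b)" using assms by (simp add: le_fun_def)
  moreover have "\<not> (\<lambda>_::unit. b) \<le> (\<lambda>_. a)" using assms by (simp add: le_fun_def)
  ultimately show ?thesis by (simp add: less_fun_def)
qed

lemma key_full:
  assumes "(\<Sum>j\<in>UNIV. vec E j) = n" "n \<le> card (vsupp (E :: ('d::finite \<times> unit) \<Rightarrow>\<^sub>0 nat))"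
  shows "(\<forall>j. vec E j - 1 = 0) \<and> card (vsupp E) = n"
proof -
  have "(\<Sum>j\<in>UNIV. vec E j) = (\<Sum>j\<in>UNIV. vec E j - 1) + card (vsupp E)"
    unfolding vsupp_def by (rule sum_minus_one)
  then have "(\<Sum>j\<in>UNIV. vec E j - 1) = 0" "card (vsupp E) = n" using assms by auto
  then show ?thesis by simp
qed

lemma span_base:
  assumes "0 < n" "good n n (f :: ('d::finite, unit, 'a::comm_ring_1) tens)"
  shows "\<exists>c. f - Poly_Mapping.single 0 c * gam n (\<lambda>_. 1) \<in> Gamma_less (\<lambda>_. n)"
proof (cases "Poly_Mapping.keys f = {}")
  case True
  then have "f = 0" by simp
  then show ?thesis unfolding Gamma_less_def using ga_zero by (intro exI[of _ 0]) simp
next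
  case False
  then obtain E0 where E0: "E0 \<in> Poly_Mapping.keys f" by blast
  have sym: "symmetric f" and hom: "\<forall>E\<in>Poly_Mapping.keys f. (\<Sum>j\<in>UNIV. vec E j) = n"
    and big: "\<forall>E\<in>Poly_Mapping.keys f. n \<le> card (vsupp E)"
    using assms(2) unfolding good_def homog_unit by auto
  have kf: "(\<forall>j. vec E j - 1 = 0) \<and> card (vsupp E) = n" if "E \<in> Poly_Mapping.keys f" for E
    using key_full hom big that by blast
  define c where "c = Poly_Mapping.lookup f E0"
  have lg: "Poly_Mapping.lookup (gam n (\<lambda>_. 1) :: ('d, unit, 'a) tens) E
      = (if (\<forall>j. vec E j - 1 = 0) \<and> card (vsupp E) = n then 1 else 0)" for E
  proof -
    let ?T = "{S\<in>{S :: 'd set. card S = n}. tmon (ind S (\<lambda>_. 1)) = E}"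
    have T: "?T = (if (\<forall>j. vec E j - 1 = 0) \<and> card (vsupp E) = n then {vsupp E} else {})"
    proof -
      have "S \<in> ?T \<longleftrightarrow> S = vsupp E \<and> (\<forall>j. vec E j - 1 = 0) \<and> card (vsupp E) = n" for S
      proof -
        have "S \<in> ?T \<longleftrightarrow> card S = n \<and> (\<forall>j. (if j \<in> S then 1 else 0) = vec E j)"
          by (simp add: tmon_unit_eq ind_unit)
        also have "\<dots> \<longleftrightarrow> S = vsupp E \<and> (\<forall>j. vec E j - 1 = 0) \<and> card (vsupp E) = n"
        proof
          assume h: "card S = n \<and> (\<forall>j. (if j \<in> S then 1 else 0) = vec E j)"
          have hj: "(if j \<in> S then 1 else 0) = vec E j" for j using h by blast
          have Seq: "S = vsupp E"
          proof
            show "S \<subseteq> vsupp E"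
            proof
              fix j assume "j \<in> S"
              then show "j \<in> vsupp E" using hj[of j, symmetric] by (simp add: vsupp_def)
            qed
            show "vsupp E \<subseteq> S"
            proof
              fix j assume "j \<in> vsupp E"
              then show "j \<in> S" using hj[of j] by (auto simp: vsupp_def split: if_splits)
            qed
          qed
          have "vec E j - 1 = 0" for j using hj[of j] by (cases "j \<in> S") auto
          then show "S = vsupp E \<and> (\<forall>j. vec E j - 1 = 0) \<and> card (vsupp E) = n"
            using h Seq by simp
        next
          assume h: "S = vsupp E \<and> (\<forall>j. vec E j - 1 = 0) \<and> card (vsupp E) = n"
          have "(if j \<in> S then 1 else 0) = vec E j" for j
          proof (cases "j \<in> S")
            case True
            then have "vec E j \<noteq> 0" "vec E j - 1 = 0" using h by (auto simp: vsupp_def)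
            then have "vec E j = 1" by linarith
            then show ?thesis using True by simp
          next
            case False
            then have "vec E j = 0" using h by (auto simp: vsupp_def)
            then show ?thesis using False by simp
          qed
          then show "card S = n \<and> (\<forall>j. (if j \<in> S then 1 else 0) = vec E j)" using h by auto
        qed
        finally show ?thesis .
      qed
      then show ?thesis by auto
    qed
    have fin: "finite {S :: 'd set. card S = n}" by simp
    show ?thesis unfolding gam_ind lookup_sum_ptensor[OF fin] T by simp
  qed
  have "Poly_Mapping.lookup f E = c * Poly_Mapping.lookup (gam n (\<lambda>_. 1) :: ('d, unit, 'a) tens) E" for E
  proof (cases "(\<forall>j. vec E j - 1 = 0) \<and> card (vsupp E) = n")
    case True
    have "\<exists>\<sigma>. \<sigma> permutes UNIV \<and> (\<forall>j. vec E j = vec E0 (\<sigma> j))"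
      by (rule perm_lemma[OF permutes_id]) (use True kf[OF E0] in \<open>auto simp: vsupp_def\<close>)
    then obtain \<sigma> where "\<sigma> permutes UNIV" "\<forall>j. vec E j = vec E0 (\<sigma> j)" by blast
    then have "Poly_Mapping.lookup f E = c" unfolding c_def by (intro sym_lookup[OF sym]) auto
    then show ?thesis using True unfolding lg by simp
  next
    case False
    then have "E \<notin> Poly_Mapping.keys f" using kf by blast
    then show ?thesis using False unfolding lg by (auto simp: in_keys_iff)
  qed
  then have "f = Poly_Mapping.single 0 c * gam n (\<lambda>_. 1)"
    by (intro poly_mapping_eqI) (simp add: lookup_scalar)
  then show ?thesis unfolding Gamma_less_def using ga_zero by (intro exI[of _ c]) simp
qed


lemma span_main:
  assumes n0: "0 < n" and ln: "l \<le> n"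
  shows "\<forall>f :: ('d::finite, unit, 'a::comm_ring_1) tens. good n l f \<longrightarrow>
           (\<exists>c. f - Poly_Mapping.single 0 c * gam n (\<lambda>_. 1) \<in> Gamma_less (\<lambda>_. n))"
  using ln
proof (induction rule: inc_induct)
  case base
  then show ?case using span_base[OF n0] by blast
next
  case (step l)
  have main: "\<forall>f :: ('d, unit, 'a) tens. card {E\<in>Poly_Mapping.keys f. card (vsupp E) = l} = N \<longrightarrow> good n l f \<longrightarrow>
           (\<exists>c. f - Poly_Mapping.single 0 c * gam n (\<lambda>_. 1) \<in> Gamma_less (\<lambda>_. n))" for N
  proof (induction N rule: less_induct)
    case (less N)
    show ?case
    proof (intro allI impI)
      fix f :: "('d, unit, 'a) tens"
      assume cN: "card {E\<in>Poly_Mapping.keys f. card (vsupp E) = l} = N" and gf: "good n l f"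
      have symf: "symmetric f" and homf: "homogeneous (\<lambda>_. n) f"
        and bigf: "\<forall>E\<in>Poly_Mapping.keys f. l \<le> card (vsupp E)"
        using gf unfolding good_def by auto
      show "\<exists>c. f - Poly_Mapping.single 0 c * gam n (\<lambda>_. 1) \<in> Gamma_less (\<lambda>_. n)"
      proof (cases "{E\<in>Poly_Mapping.keys f. card (vsupp E) = l} = {}")
        case True
        then have "good n (Suc l) f" using gf unfolding good_def by force
        then show ?thesis by (rule step.IH[rule_format])
      next
        case False
        then obtain a where a: "a \<in> Poly_Mapping.keys f" "card (vsupp a) = l" by blast
        define u where "u = vec a"
        define \<mu> where "\<mu> = (\<lambda>j. u j - 1)"
        have degu: "(\<Sum>j\<in>UNIV. u j) = n" using homf a(1) unfolding homog_unit u_def by blast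
        have cu: "card {j. u j \<noteq> 0} = l" using a(2) by (simp add: vsupp_def u_def)
        have l1: "1 \<le> l"
        proof (rule ccontr)
          assume "\<not> 1 \<le> l"
          then have "card {j. u j \<noteq> 0} = 0" using cu by simp
          moreover have "finite {j. u j \<noteq> 0}" by simp
          ultimately have "{j. u j \<noteq> 0} = {}" by (simp only: card_0_eq)
          then have "(\<Sum>j\<in>UNIV. u j) = 0" by auto
          then show False using degu n0 by simp
        qed
        have smu: "(\<Sum>j\<in>UNIV. \<mu> j) = n - l"
          using sum_minus_one[of u] degu cu unfolding \<mu>_def by simp
        define P where "P = (gam l (\<lambda>_. 1) * Mo \<mu> :: ('d, unit, 'a) tens)"
        have hg: "homogeneous (\<lambda>_. l) (gam l (\<lambda>_. 1) :: ('d, unit, 'a) tens)"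
          using homog_gam[of l "\<lambda>_::unit. 1::nat"] by simp
        have hM: "homogeneous (\<lambda>_. n - l) (Mo \<mu> :: ('d, unit, 'a) tens)"
          using homog_Mo[of \<mu>] smu by simp
        have g1: "(gam l (\<lambda>_. 1) :: ('d, unit, 'a) tens) \<in> Gamma_less (\<lambda>_. n)"
          by (rule gen_in_GL[OF sym_gam hg less_const_fun]) (use step.hyps in simp)
        have g2: "(Mo \<mu> :: ('d, unit, 'a) tens) \<in> Gamma_less (\<lambda>_. n)"
          by (rule gen_in_GL[OF sym_Mo hM less_const_fun]) (use l1 n0 in simp)
        have PGL: "P \<in> Gamma_less (\<lambda>_. n)"
          unfolding P_def using gen_alg.mult[OF g1[unfolded Gamma_less_def] g2[unfolded Gamma_less_def]]
          unfolding Gamma_less_def .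
        have symP: "symmetric P" unfolding P_def by (rule sym_mult[OF sym_gam sym_Mo])
        have homP: "homogeneous (\<lambda>_. n) P"
          using homog_mult[OF hg hM] step.hyps unfolding P_def by simp
        define g where "g = f - Poly_Mapping.single 0 (Poly_Mapping.lookup f a) * P"
        have symg: "symmetric g" unfolding g_def
          by (rule sym_diff[OF symf sym_mult[OF sym_scalar symP]])
        have homg: "homogeneous (\<lambda>_. n) g" unfolding g_def
          by (rule homog_diff[OF homf homog_scalar[OF homP]])
        have keysg: "Poly_Mapping.keys g \<subseteq> Poly_Mapping.keys f \<union> Poly_Mapping.keys P"
        proof -
          have "Poly_Mapping.keys g \<subseteq> Poly_Mapping.keys f \<union> Poly_Mapping.keys (Poly_Mapping.single 0 (Poly_Mapping.lookup f a) * P)"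
            unfolding g_def by (rule keys_diff')
          then show ?thesis using keys_scalar[of "Poly_Mapping.lookup f a" P] by blast
        qed
        have bigg: "\<forall>E\<in>Poly_Mapping.keys g. l \<le> card (vsupp E)"
          using keysg bigf keys_gamMo unfolding P_def by blast
        have gg: "good n l g" unfolding good_def using symg homg bigg by (intro conjI)
        have sub: "{E\<in>Poly_Mapping.keys g. card (vsupp E) = l} \<subseteq> {E\<in>Poly_Mapping.keys f. card (vsupp E) = l} - {a}"
        proof
          fix E assume E: "E \<in> {E\<in>Poly_Mapping.keys g. card (vsupp E) = l}"
          then have Eg: "E \<in> Poly_Mapping.keys g" and El: "card (vsupp E) = l" by auto
          have lgE: "Poly_Mapping.lookup g E = Poly_Mapping.lookup f E - Poly_Mapping.lookup f a *
              (if (\<lambda>j. vec E j - 1) \<in> orb \<mu> then 1 else 0)"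
            unfolding g_def P_def lookup_minus lookup_scalar lookup_gamMo[OF El] by (rule refl)
          have notin: "(\<lambda>j. vec E j - 1) \<notin> orb \<mu>"
          proof
            assume "(\<lambda>j. vec E j - 1) \<in> orb \<mu>"
            then obtain \<pi> where \<pi>: "\<pi> permutes UNIV" "(\<lambda>j. vec E j - 1) = \<mu> \<circ> \<pi>"
              unfolding orb_def by auto
            have "\<exists>\<sigma>. \<sigma> permutes UNIV \<and> (\<forall>j. vec E j = u (\<sigma> j))"
            proof (rule perm_lemma[OF \<pi>(1)])
              show "card {j. vec E j \<noteq> 0} = card {j. u j \<noteq> 0}" using El cu by (simp add: vsupp_def)
              show "vec E j - 1 = u (\<pi> j) - 1" for j using fun_cong[OF \<pi>(2), of j] by (simp add: \<mu>_def)
            qed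
            then obtain \<sigma> where \<sigma>: "\<sigma> permutes UNIV" "\<forall>j. vec E j = u (\<sigma> j)" by blast
            have "Poly_Mapping.lookup f E = Poly_Mapping.lookup f a"
              by (rule sym_lookup[OF symf \<sigma>(1)]) (use \<sigma>(2) in \<open>simp add: u_def\<close>)
            then have "Poly_Mapping.lookup g E = 0" using lgE \<open>(\<lambda>j. vec E j - 1) \<in> orb \<mu>\<close> by simp
            then show False using Eg by (simp add: in_keys_iff)
          qed
          then have "Poly_Mapping.lookup g E = Poly_Mapping.lookup f E" using lgE by simp
          then have "E \<in> Poly_Mapping.keys f" using Eg by (simp add: in_keys_iff)
          moreover have "E \<noteq> a"
          proof
            assume "E = a"
            then have "(\<lambda>j. vec E j - 1) = \<mu>" by (simp add: \<mu>_def u_def)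
            then show False using notin orb_self[of \<mu>] by simp
          qed
          ultimately show "E \<in> {E\<in>Poly_Mapping.keys f. card (vsupp E) = l} - {a}" using El by simp
        qed
        have cl: "card {E\<in>Poly_Mapping.keys g. card (vsupp E) = l} < N"
        proof -
          have "card {E\<in>Poly_Mapping.keys g. card (vsupp E) = l} \<le> card ({E\<in>Poly_Mapping.keys f. card (vsupp E) = l} - {a})"
            by (rule card_mono[OF _ sub]) simp
          also have "\<dots> < card {E\<in>Poly_Mapping.keys f. card (vsupp E) = l}"
            by (rule card_Diff1_less) (use a in simp_all)
          finally show ?thesis using cN by simp
        qed
        then obtain c where c: "g - Poly_Mapping.single 0 c * gam n (\<lambda>_. 1) \<in> Gamma_less (\<lambda>_. n)"
          using less.IH[OF cl, rule_format, OF refl gg] by blast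
        have "f - Poly_Mapping.single 0 c * gam n (\<lambda>_. 1) =
            (g - Poly_Mapping.single 0 c * gam n (\<lambda>_. 1)) + Poly_Mapping.single 0 (Poly_Mapping.lookup f a) * P"
          unfolding g_def by simp
        also have "\<dots> \<in> Gamma_less (\<lambda>_. n)"
          using gen_alg.add[OF c[unfolded Gamma_less_def] ga_scalar[OF PGL[unfolded Gamma_less_def]]]
          unfolding Gamma_less_def .
        finally show ?thesis by (rule exI)
      qed
    qed
  qed
  show ?case
  proof (intro allI impI)
    fix f :: "('d, unit, 'a) tens" assume "good n l f"
    then show "\<exists>c. f - Poly_Mapping.single 0 c * gam n (\<lambda>_. 1) \<in> Gamma_less (\<lambda>_. n)"
      by (rule main[rule_format, OF refl])
  qed
qed

lemma spanning:
  assumes "0 < n" "symmetric f" "homogeneous (\<lambda>_. n) (f :: ('d::finite, unit, 'a::comm_ring_1) tens)"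
  shows "\<exists>c. f - Poly_Mapping.single 0 c * gam n (\<lambda>_. 1) \<in> Gamma_less (\<lambda>_. n)"
proof -
  have "good n 0 f" unfolding good_def using assms(2,3) by simp
  then show ?thesis using span_main[OF assms(1) le0] by blast
qed


definition wz :: "('d \<Rightarrow> complex) \<Rightarrow> (('d \<times> unit) \<Rightarrow>\<^sub>0 nat) \<Rightarrow> complex" where
  "wz z E = (\<Prod>j\<in>UNIV. z j ^ vec E j)"
definition dg :: "(('d \<times> unit) \<Rightarrow>\<^sub>0 nat) \<Rightarrow> nat" where
  "dg E = (\<Sum>j\<in>UNIV. vec E j)"
definition EV :: "('d::finite \<Rightarrow> complex) \<Rightarrow> ('d, unit, int) tens \<Rightarrow> complex poly" where
  "EV z p = ext (\<lambda>E. monom (wz z E) (dg E)) of_int p"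

lemma vec_add: "vec (x + y) = (\<lambda>j. vec x j + vec y j)"
  by (simp add: vec_def lookup_add fun_eq_iff)

lemma vec_zero: "vec 0 = (\<lambda>_. 0)"
  by (simp add: vec_def fun_eq_iff)

lemma wz_add: "wz z (x + y) = wz z x * wz z y"
proof -
  have "wz z (x + y) = (\<Prod>j\<in>UNIV. z j ^ vec x j * z j ^ vec y j)"
    unfolding wz_def vec_add by (simp only: power_add)
  also have "\<dots> = wz z x * wz z y" unfolding wz_def by (rule prod.distrib)
  finally show ?thesis .
qed

lemma dg_add: "dg (x + y) = dg x + dg y"
  unfolding dg_def vec_add by (rule sum.distrib)

lemma W_mult: "monom (wz z (x + y)) (dg (x + y)) = monom (wz z x) (dg x) * monom (wz z y) (dg y)"
  by (simp only: mult_monom wz_add dg_add)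

lemma EV_add: "EV z (p + q) = EV z p + EV z q"
  unfolding EV_def by (rule ext_add) simp_all

lemma EV_mult: "EV z (p * q) = EV z p * EV z q"
  unfolding EV_def by (rule ext_mult) (simp_all add: W_mult)

lemma EV_diff: "EV z (p - q) = EV z p - EV z q"
  unfolding EV_def by (rule ext_diff) simp_all

lemma EV_single0: "EV (z :: 'd::finite \<Rightarrow> complex) (Poly_Mapping.single 0 c) = of_int c"
proof -
  have "wz z 0 = 1" "dg (0 :: ('d \<times> unit) \<Rightarrow>\<^sub>0 nat) = 0" by (simp_all add: wz_def dg_def vec_zero)
  then show ?thesis unfolding EV_def by (simp add: ext_single monom_0)
qed

lemma EV_of_nat: "EV z (of_nat k) = of_nat k"
proof -
  have e: "(of_nat k :: ('d, unit, int) tens) = Poly_Mapping.single 0 (int k)" by simp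
  show ?thesis unfolding e EV_single0 by simp
qed

lemma coeff_EV_homog:
  assumes "homogeneous (\<lambda>_. t) g"
  shows "coeff (EV z g) s = (if s = t then (\<Sum>E\<in>Poly_Mapping.keys g. of_int (Poly_Mapping.lookup g E) * wz z E) else 0)"
proof -
  have dgE: "dg E = t" if "E \<in> Poly_Mapping.keys g" for E
    using assms that unfolding homog_unit dg_def by blast
  have "coeff (EV z g) s = (\<Sum>E\<in>Poly_Mapping.keys g. coeff (of_int (Poly_Mapping.lookup g E) * monom (wz z E) (dg E)) s)"
    unfolding EV_def ext_def coeff_sum ..
  also have "\<dots> = (\<Sum>E\<in>Poly_Mapping.keys g. if s = t then of_int (Poly_Mapping.lookup g E) * wz z E else 0)"
    by (rule sum.cong) (simp_all add: of_int_monom mult_monom dgE)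
  also have "\<dots> = (if s = t then (\<Sum>E\<in>Poly_Mapping.keys g. of_int (Poly_Mapping.lookup g E) * wz z E) else 0)"
    by simp
  finally show ?thesis .
qed

lemma ev_sym_rot:
  assumes \<rho>: "\<rho> permutes UNIV" and z\<rho>: "\<And>j. z (\<rho> j) = \<omega> * z j"
    and sym: "symmetric g" and hom: "homogeneous (\<lambda>_. t) (g :: ('d::finite, unit, int) tens)"
  shows "(\<Sum>E\<in>Poly_Mapping.keys g. of_int (Poly_Mapping.lookup g E) * wz z E)
       = \<omega> ^ t * (\<Sum>E\<in>Poly_Mapping.keys g. of_int (Poly_Mapping.lookup g E) * wz z E)"
proof -
  define \<sigma> where "\<sigma> = inv \<rho>"
  have \<sigma>: "\<sigma> permutes UNIV" unfolding \<sigma>_def by (rule permutes_inv[OF \<rho>])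
  have \<sigma>\<rho>: "\<sigma> (\<rho> j) = j" for j unfolding \<sigma>_def using permutes_inverses(2)[OF \<rho>] by simp
  have \<rho>\<sigma>: "\<rho> (\<sigma> j) = j" for j unfolding \<sigma>_def using permutes_inverses(1)[OF \<rho>] by simp
  let ?\<Phi> = "perm_mon \<sigma>"
  have lk: "Poly_Mapping.lookup g (perm_mon \<tau> E) = Poly_Mapping.lookup g E" if "\<tau> permutes UNIV" for \<tau> E
    using sym that unfolding symmetric_def by blast
  have bij: "bij_betw ?\<Phi> (Poly_Mapping.keys g) (Poly_Mapping.keys g)"
  proof (rule bij_betw_byWitness[where f'="perm_mon \<rho>"])
    show "\<forall>a\<in>Poly_Mapping.keys g. perm_mon \<rho> (?\<Phi> a) = a"
      by (simp add: perm_mon_comp \<sigma>\<rho> comp_def perm_mon_id[unfolded id_def])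
    show "\<forall>a\<in>Poly_Mapping.keys g. ?\<Phi> (perm_mon \<rho> a) = a"
      by (simp add: perm_mon_comp \<rho>\<sigma> comp_def perm_mon_id[unfolded id_def])
    show "?\<Phi> ` Poly_Mapping.keys g \<subseteq> Poly_Mapping.keys g"
      using lk[OF \<sigma>] by (auto simp: in_keys_iff)
    show "perm_mon \<rho> ` Poly_Mapping.keys g \<subseteq> Poly_Mapping.keys g"
      using lk[OF \<rho>] by (auto simp: in_keys_iff)
  qed
  have wzp: "wz z (?\<Phi> E) = \<omega> ^ t * wz z E" if "E \<in> Poly_Mapping.keys g" for E
  proof -
    have dE: "(\<Sum>j\<in>UNIV. vec E j) = t" using hom that unfolding homog_unit by blast
    have vp: "vec (?\<Phi> E) j = vec E (\<sigma> j)" for j by (simp add: vec_def lookup_perm_mon)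
    have "wz z (?\<Phi> E) = (\<Prod>j\<in>UNIV. z j ^ vec E (\<sigma> j))" by (simp add: wz_def vp)
    also have "\<dots> = (\<Prod>j\<in>UNIV. z (\<rho> j) ^ vec E (\<sigma> (\<rho> j)))"
      using prod.permute[OF \<rho>, of "\<lambda>j. z j ^ vec E (\<sigma> j)"] by simp
    also have "\<dots> = (\<Prod>j\<in>UNIV. \<omega> ^ vec E j * z j ^ vec E j)"
      by (simp add: \<sigma>\<rho> z\<rho> power_mult_distrib)
    also have "\<dots> = \<omega> ^ (\<Sum>j\<in>UNIV. vec E j) * wz z E"
      by (simp add: prod.distrib wz_def power_sum)
    finally show ?thesis using dE by simp
  qed
  have "(\<Sum>E\<in>Poly_Mapping.keys g. of_int (Poly_Mapping.lookup g E) * wz z E)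
      = (\<Sum>E\<in>Poly_Mapping.keys g. of_int (Poly_Mapping.lookup g (?\<Phi> E)) * wz z (?\<Phi> E))"
    by (rule sum.reindex_bij_betw[OF bij, symmetric])
  also have "\<dots> = (\<Sum>E\<in>Poly_Mapping.keys g. \<omega> ^ t * (of_int (Poly_Mapping.lookup g E) * wz z E))"
    by (rule sum.cong) (simp_all add: lk[OF \<sigma>] wzp)
  also have "\<dots> = \<omega> ^ t * (\<Sum>E\<in>Poly_Mapping.keys g. of_int (Poly_Mapping.lookup g E) * wz z E)"
    by (simp add: sum_distrib_left)
  finally show ?thesis .
qed

lemma strong_vanish:
  assumes \<rho>: "\<rho> permutes UNIV" and z\<rho>: "\<And>j. z (\<rho> j) = \<omega> * z j"
    and \<omega>: "\<And>t. 0 < t \<Longrightarrow> t < n \<Longrightarrow> \<omega> ^ t \<noteq> 1"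
    and p: "(p :: ('d::finite, unit, int) tens) \<in> Gamma_less (\<lambda>_. n)"
  shows "1 \<le> s \<Longrightarrow> s \<le> n \<Longrightarrow> coeff (EV z p) s = 0"
  using p unfolding Gamma_less_def
proof (induction arbitrary: s rule: gen_alg.induct)
  case (scalar a)
  then show ?case by (simp add: EV_single0 of_int_monom)
next
  case (gen g)
  then obtain \<beta> where g: "symmetric g" "\<beta> < (\<lambda>_. n)" "homogeneous \<beta> g" by blast
  have \<beta>: "\<beta> = (\<lambda>_. \<beta> ())" by (auto simp: fun_eq_iff)
  have \<beta>n: "\<beta> () < n"
  proof -
    have "\<not> (\<lambda>_::unit. n) \<le> \<beta>" using g(2) by (simp add: less_fun_def)
    then show ?thesis by (auto simp: le_fun_def not_le)
  qed
  have hom: "homogeneous (\<lambda>_. \<beta> ()) g" using g(3) \<beta> by simp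
  show ?case
  proof (cases "s = \<beta> ()")
    case True
    let ?S = "\<Sum>E\<in>Poly_Mapping.keys g. of_int (Poly_Mapping.lookup g E) * wz z E"
    have "?S = \<omega> ^ (\<beta> ()) * ?S" by (rule ev_sym_rot[OF \<rho>, of z \<omega> g "\<beta> ()", OF z\<rho> g(1) hom])
    moreover have "\<omega> ^ (\<beta> ()) \<noteq> 1" using \<omega>[of "\<beta> ()"] True gen.prems \<beta>n by simp
    ultimately have "(\<omega> ^ (\<beta> ()) - 1) * ?S = 0" "\<omega> ^ (\<beta> ()) - 1 \<noteq> 0"
      by (simp_all add: algebra_simps)
    then have "?S = 0" by simp
    then show ?thesis unfolding coeff_EV_homog[OF hom] by simp
  next
    case False
    then show ?thesis unfolding coeff_EV_homog[OF hom] by simp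
  qed
next
  case (add p q)
  then show ?case by (simp add: EV_add)
next
  case (mult p q)
  have "coeff (EV z (p * q)) s = (\<Sum>i\<le>s. coeff (EV z p) i * coeff (EV z q) (s - i))"
    by (simp add: EV_mult coeff_mult)
  also have "\<dots> = 0"
  proof (rule sum.neutral, intro ballI)
    fix i assume "i \<in> {..s}"
    then have "i \<le> s" by simp
    show "coeff (EV z p) i * coeff (EV z q) (s - i) = 0"
    proof (cases "i = 0")
      case True
      then show ?thesis using mult.IH(2)[of s] mult.prems by simp
    next
      case False
      then show ?thesis using mult.IH(1)[of i] mult.prems \<open>i \<le> s\<close> by simp
    qed
  qed
  finally show ?case .
qed


lemma omega_pow_n: "0 < n \<Longrightarrow> cis (2 * pi / real n) ^ n = 1"
  by (simp add: DeMoivre)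

lemma omega_pow_ne1:
  assumes "0 < t" "t < n"
  shows "cis (2 * pi / real n) ^ t \<noteq> 1"
proof
  assume h: "cis (2 * pi / real n) ^ t = 1"
  have "cis (real t * (2 * pi / real n)) = 1" using h by (simp add: DeMoivre)
  then have "Re (cis (real t * (2 * pi / real n))) = 1" by simp
  then have "cos (real t * (2 * pi / real n)) = 1" by simp
  then obtain i :: int where i: "real t * (2 * pi / real n) = of_int i * 2 * pi"
    using cos_one_2pi_int by blast
  have n0: "real n > 0" using assms by simp
  have "real t = of_int i * real n" using i n0 pi_gt_zero by (simp add: field_simps)
  note eq = this
  have "real t < real n" "0 < real t" using assms by simp_all
  then have h0: "0 < of_int i * real n" and h1: "of_int i * real n < 1 * real n" using eq by linarith+
  have "0 < (of_int i :: real)" using h0 n0 by (simp add: zero_less_mult_iff)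
  moreover have "(of_int i :: real) < 1" using h1 n0 by (simp only: mult_less_cancel_right_pos)
  ultimately have "0 < i" "i < 1" by simp_all
  then show False by simp
qed

lemma pow_mod_eq: "(w :: 'a::comm_ring_1) ^ n = 1 \<Longrightarrow> w ^ (a mod n) = w ^ a"
proof -
  assume w: "w ^ n = 1"
  have "w ^ a = w ^ (n * (a div n) + a mod n)" by simp
  also have "\<dots> = (w ^ n) ^ (a div n) * w ^ (a mod n)" by (simp only: power_add power_mult)
  finally show ?thesis using w by simp
qed

lemma succ_mod_inj:
  assumes "a < n" "b < n" "(a + 1) mod n = (b + 1) mod (n::nat)"
  shows "a = b"
proof -
  have ma: "(a + 1) mod n = (if a + 1 = n then 0 else a + 1)" using assms(1) by auto
  have mb: "(b + 1) mod n = (if b + 1 = n then 0 else b + 1)" using assms(2) by auto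
  show ?thesis using assms(3) unfolding ma mb by (auto split: if_splits)
qed

lemma rotation_exists:
  assumes n0: "0 < n" and nd: "n \<le> card (UNIV :: 'd::finite set)"
  shows "\<exists>(z :: 'd \<Rightarrow> complex) \<rho> \<omega> T. \<rho> permutes UNIV \<and> (\<forall>j. z (\<rho> j) = \<omega> * z j) \<and>
     (\<forall>t. 0 < t \<and> t < n \<longrightarrow> \<omega> ^ t \<noteq> 1) \<and> card T = n \<and> (\<forall>j. j \<notin> T \<longrightarrow> z j = 0) \<and> (\<forall>j\<in>T. z j \<noteq> 0)"
proof -
  obtain f :: "'d \<Rightarrow> nat" where f: "bij_betw f UNIV {0..<card (UNIV :: 'd set)}"
    using ex_bij_betw_finite_nat[of "UNIV :: 'd set"] by auto
  define \<omega> where "\<omega> = cis (2 * pi / real n)"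
  define z where "z j = (if f j < n then \<omega> ^ f j else 0)" for j
  define g where "g = inv_into UNIV f"
  define \<rho> where "\<rho> j = (if f j < n then g ((f j + 1) mod n) else j)" for j
  define T where "T = {j. f j < n}"
  have injf: "inj f" using f by (simp add: bij_betw_def)
  have fg: "f (g a) = a" if "a < card (UNIV :: 'd set)" for a
    unfolding g_def using f that by (simp add: bij_betw_def f_inv_into_f)
  have fgn: "f (g a) = a" if "a < n" for a using fg that nd by simp
  have f\<rho>: "f (\<rho> j) = (f j + 1) mod n" if "f j < n" for j
    using that fgn[of "(f j + 1) mod n"] n0 by (simp add: \<rho>_def)
  have inj\<rho>: "inj \<rho>"
  proof (rule injI)
    fix x y assume e: "\<rho> x = \<rho> y"
    show "x = y"
    proof (cases "f x < n"; cases "f y < n")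
      assume "f x < n" "f y < n"
      then have "(f x + 1) mod n = (f y + 1) mod n" using e f\<rho>[of x] f\<rho>[of y] by simp
      then have "f x = f y" using \<open>f x < n\<close> \<open>f y < n\<close> by (rule succ_mod_inj[rotated 2])
      then show ?thesis using injf by (simp add: inj_eq)
    next
      assume "f x < n" "\<not> f y < n"
      then have "f (\<rho> x) < n" "\<rho> y = y" using f\<rho> n0 by (simp_all add: \<rho>_def)
      then show ?thesis using e \<open>\<not> f y < n\<close> by simp
    next
      assume "\<not> f x < n" "f y < n"
      then have "f (\<rho> y) < n" "\<rho> x = x" using f\<rho> n0 by (simp_all add: \<rho>_def)
      then show ?thesis using e \<open>\<not> f x < n\<close> by simp
    next
      assume "\<not> f x < n" "\<not> f y < n"
      then show ?thesis using e by (simp add: \<rho>_def)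
    qed
  qed
  have \<rho>: "\<rho> permutes UNIV"
    by (rule inj_imp_permutes[OF inj\<rho>]) simp_all
  have \<omega>n: "\<omega> ^ n = 1" unfolding \<omega>_def using n0 by (rule omega_pow_n)
  have z\<rho>: "z (\<rho> j) = \<omega> * z j" for j
  proof (cases "f j < n")
    case True
    then have "z (\<rho> j) = \<omega> ^ ((f j + 1) mod n)" using f\<rho> n0 by (simp add: z_def)
    also have "\<dots> = \<omega> ^ (f j + 1)" by (rule pow_mod_eq[OF \<omega>n])
    finally show ?thesis using True by (simp add: z_def)
  next
    case False
    then show ?thesis by (simp add: z_def \<rho>_def)
  qed
  have cT: "card T = n"
  proof -
    have "f ` T = {0..<n}"
    proof
      show "f ` T \<subseteq> {0..<n}" unfolding T_def by auto
      show "{0..<n} \<subseteq> f ` T"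
      proof
        fix a assume "a \<in> {0..<n}"
        then have "a < n" by simp
        then have ga: "g a \<in> T" "f (g a) = a" using fgn by (simp_all add: T_def)
        have "f (g a) \<in> f ` T" using ga(1) by (rule imageI)
        then show "a \<in> f ` T" by (simp only: ga(2))
      qed
    qed
    moreover have "inj_on f T" by (rule inj_on_subset[OF injf subset_UNIV])
    ultimately have "card {0..<n} = card T" using card_image[of f T] by simp
    then show ?thesis by simp
  qed
  have "\<forall>t. 0 < t \<and> t < n \<longrightarrow> \<omega> ^ t \<noteq> 1" unfolding \<omega>_def using omega_pow_ne1 by blast
  moreover have "\<forall>j. j \<notin> T \<longrightarrow> z j = 0" by (simp add: T_def z_def)
  moreover have "\<forall>j\<in>T. z j \<noteq> 0" by (simp add: T_def z_def \<omega>_def)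
  ultimately show ?thesis using \<rho> z\<rho> cT
    by (intro exI[of _ z] exI[of _ \<rho>] exI[of _ \<omega>] exI[of _ T] conjI allI) simp_all
qed


lemma EV_ptensor: "EV z (ptensor e) = monom (wz z (tmon e)) (dg (tmon e))"
  unfolding EV_def ptensor_def by (simp add: ext_single)

lemma EV_sum: "EV z (\<Sum>i\<in>I. f i) = (\<Sum>i\<in>I. EV z (f i))"
  unfolding EV_def by (rule ext_sum) simp_all

lemma vec_tmon_ind: "vec (tmon (ind S \<beta>) :: ('d::finite \<times> unit) \<Rightarrow>\<^sub>0 nat) j = (if j \<in> S then \<beta> () else 0)"
  by (simp add: vec_def lookup_tmon ind_def)

lemma coeff_EV_gam:
  "coeff (EV z (gam n (\<lambda>_::unit. 1) :: ('d::finite, unit, int) tens)) n = (\<Sum>S\<in>{S::'d set. card S = n}. \<Prod>j\<in>S. z j)"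
proof -
  have w: "wz z (tmon (ind S (\<lambda>_::unit. 1))) = (\<Prod>j\<in>S. z j)" for S :: "'d set"
  proof -
    have "wz z (tmon (ind S (\<lambda>_::unit. 1))) = (\<Prod>j\<in>UNIV. if j \<in> S then z j else 1)"
      unfolding wz_def by (rule prod.cong) (simp_all add: vec_tmon_ind)
    also have "\<dots> = (\<Prod>j\<in>S. z j)" by (simp add: prod.If_cases)
    finally show ?thesis .
  qed
  have d: "dg (tmon (ind S (\<lambda>_::unit. 1)) :: ('d \<times> unit) \<Rightarrow>\<^sub>0 nat) = card S" for S :: "'d set"
  proof -
    have "dg (tmon (ind S (\<lambda>_::unit. 1)) :: ('d \<times> unit) \<Rightarrow>\<^sub>0 nat) = (\<Sum>j\<in>UNIV. if j \<in> S then 1 else 0)"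
      unfolding dg_def by (rule sum.cong) (simp_all add: vec_tmon_ind)
    also have "\<dots> = card S" by (simp add: sum.If_cases)
    finally show ?thesis .
  qed
  have "coeff (EV z (gam n (\<lambda>_::unit. 1) :: ('d, unit, int) tens)) n
      = (\<Sum>S\<in>{S::'d set. card S = n}. coeff (monom (\<Prod>j\<in>S. z j) (card S)) n)"
    unfolding gam_ind EV_sum EV_ptensor coeff_sum w d ..
  also have "\<dots> = (\<Sum>S\<in>{S::'d set. card S = n}. \<Prod>j\<in>S. z j)"
    by (rule sum.cong) simp_all
  finally show ?thesis .
qed

lemma phi_G_nonzero:
  assumes cT: "card (T :: 'd::finite set) = n" and z0: "\<And>j. j \<notin> T \<Longrightarrow> z j = 0" and zT: "\<And>j. j \<in> T \<Longrightarrow> z j \<noteq> 0"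
  shows "coeff (EV z (gam n (\<lambda>_::unit. 1) :: ('d, unit, int) tens)) n \<noteq> 0"
proof -
  have Tin: "T \<in> {S::'d set. card S = n}" using cT by simp
  have zero: "(\<Prod>j\<in>S. z j) = 0" if "S \<in> {S::'d set. card S = n} - {T}" for S
  proof -
    have "\<not> S \<subseteq> T"
    proof
      assume "S \<subseteq> T"
      then have "S = T" using that cT by (intro card_subset_eq) auto
      then show False using that by simp
    qed
    then obtain j where "j \<in> S" "j \<notin> T" by blast
    then show ?thesis using z0 by (intro prod_zero) auto
  qed
  have "(\<Sum>S\<in>{S::'d set. card S = n}. \<Prod>j\<in>S. z j) = (\<Prod>j\<in>T. z j) + (\<Sum>S\<in>{S::'d set. card S = n} - {T}. \<Prod>j\<in>S. z j)"
    by (rule sum.remove[OF _ Tin]) simp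
  also have "(\<Sum>S\<in>{S::'d set. card S = n} - {T}. \<Prod>j\<in>S. z j) = 0"
    by (rule sum.neutral) (use zero in blast)
  finally have "(\<Sum>S\<in>{S::'d set. card S = n}. \<Prod>j\<in>S. z j) = (\<Prod>j\<in>T. z j)" by simp
  moreover have "(\<Prod>j\<in>T. z j) \<noteq> 0" using zT by (simp add: prod_zero_iff)
  ultimately show ?thesis unfolding coeff_EV_gam by simp
qed

lemma sign_lemma:
  assumes "1 \<le> k" "k \<le> n"
  shows "((-1) ^ (k - 1) * (-1) ^ (n - 1) :: 'a::comm_ring_1) = (-1) ^ (n - k)"
proof -
  have "k - 1 + (n - 1) = (n - k) + 2 * (k - 1)" using assms by simp
  then have "((-1) ^ (k - 1) * (-1) ^ (n - 1) :: 'a) = (-1) ^ (n - k) * ((-1) ^ 2) ^ (k - 1)"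
    by (simp only: power_add[symmetric] power_mult[symmetric])
  then show ?thesis by simp
qed

lemma route_alg:
  fixes a b c K M H G P :: "'x::comm_ring_1"
  assumes "a * a = 1" "a * b = c"
  shows "K * (H - (c * M) * G) = - a * ((P - a * K * H) - (P - b * (K * M) * G))"
proof -
  have "- a * ((P - a * K * H) - (P - b * (K * M) * G)) = (a * a) * K * H - (a * b) * K * M * G"
    by (simp add: algebra_simps)
  also have "\<dots> = K * H - c * K * M * G" using assms by simp
  also have "\<dots> = K * (H - (c * M) * G)" by (simp add: algebra_simps)
  finally show ?thesis by simp
qed

lemma unit_main:
  fixes k m :: nat
  assumes k0: "0 < k" and m0: "0 < m"
  shows "(gam k (\<lambda>_::unit. m) :: ('d::finite, unit, int) tens) - ((-1) ^ (k * m - k) * of_nat m) * gam (k * m) (\<lambda>_::unit. 1)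
      \<in> Gamma_less (\<lambda>_::unit. k * m)"
proof -
  define H where "H = (gam k (\<lambda>_::unit. m) :: ('d, unit, int) tens)"
  define G where "G = (gam (k * m) (\<lambda>_::unit. 1) :: ('d, unit, int) tens)"
  define c0 :: int where "c0 = (-1) ^ (k * m - k) * int m"
  have sc: "(Poly_Mapping.single 0 c0 :: ('d, unit, int) tens) = of_int c0"
    by (simp add: single_of_int[of c0, symmetric])
  have c0e: "((-1) ^ (k * m - k) * of_nat m :: ('d, unit, int) tens) = Poly_Mapping.single 0 c0"
    unfolding sc by (simp add: c0_def)
  define X where "X = H - Poly_Mapping.single 0 c0 * G"
  have km0: "0 < k * m" using k0 m0 by simp
  have kkm: "k \<le> k * m" using m0 by simp
  have symX: "symmetric X" unfolding X_def H_def G_def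
    by (rule sym_diff[OF sym_gam sym_mult[OF sym_scalar sym_gam]])
  have hH: "homogeneous (\<lambda>_. k * m) H" using homog_gam[of k "\<lambda>_::unit. m"] unfolding H_def by simp
  have hG: "homogeneous (\<lambda>_. k * m) G" using homog_gam[of "k * m" "\<lambda>_::unit. 1"] unfolding G_def by simp
  have homX: "homogeneous (\<lambda>_. k * m) X" unfolding X_def
    by (rule homog_diff[OF hH homog_scalar[OF hG]])
  obtain c where span: "X - Poly_Mapping.single 0 c * G \<in> Gamma_less (\<lambda>_. k * m)"
    using spanning[OF km0 symX homX] unfolding G_def by blast
  have "X \<in> Gamma_less (\<lambda>_. k * m)"
  proof (cases "card (UNIV :: 'd set) < k * m")
    case True
    then have "G = 0" unfolding G_def by (rule gam_zero_big)
    then show ?thesis using span by simp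
  next
    case False
    then have kmd: "k * m \<le> card (UNIV :: 'd set)" by simp
    have A1: "gam 1 (\<lambda>_::unit. k * m) - (-1) ^ (k * m - 1) * of_nat (k * m) * G \<in> Gamma_less (\<lambda>_::unit. k * m)"
      using newton_GL[of "k * m" "\<lambda>_::unit. 1" "()", where 'a=int and 'd='d] km0 unfolding G_def mult_1_right by simp
    have A2: "gam 1 (\<lambda>_::unit. k * m) - (-1) ^ (k - 1) * of_nat k * H \<in> Gamma_less (\<lambda>_::unit. k * m)"
      using newton_GL[of k "\<lambda>_::unit. m" "()", where 'a=int and 'd='d] k0 m0 unfolding H_def by simp
    have D: "(gam 1 (\<lambda>_::unit. k * m) - (-1) ^ (k - 1) * of_nat k * H) - (gam 1 (\<lambda>_::unit. k * m) - (-1) ^ (k * m - 1) * of_nat (k * m) * G)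
        \<in> Gamma_less (\<lambda>_::unit. k * m)"
      using ga_diff[OF A2[unfolded Gamma_less_def] A1[unfolded Gamma_less_def]] unfolding Gamma_less_def .
    have aa: "((-1) ^ (k - 1) * (-1) ^ (k - 1) :: ('d, unit, int) tens) = 1"
      by (simp add: power_mult_distrib[symmetric])
    have ab: "((-1) ^ (k - 1) * (-1) ^ (k * m - 1) :: ('d, unit, int) tens) = (-1) ^ (k * m - k)"
      by (rule sign_lemma) (use k0 kkm in auto)
    have e1: "of_nat k * X = - ((-1) ^ (k - 1)) * ((gam 1 (\<lambda>_::unit. k * m) - (-1) ^ (k - 1) * of_nat k * H) - (gam 1 (\<lambda>_::unit. k * m) - (-1) ^ (k * m - 1) * (of_nat k * of_nat m) * G))"
      unfolding X_def c0e[symmetric]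
      by (rule route_alg[OF aa ab])
    have e2: "(of_nat (k * m) :: ('d, unit, int) tens) = of_nat k * of_nat m" by simp
    have e3: "(- ((-1) ^ (k - 1)) :: ('d, unit, int) tens) = of_int (- ((-1) ^ (k - 1)))" by simp
    have kXeq: "of_nat k * X = of_int (- ((-1) ^ (k - 1))) * ((gam 1 (\<lambda>_::unit. k * m) - (-1) ^ (k - 1) * of_nat k * H) - (gam 1 (\<lambda>_::unit. k * m) - (-1) ^ (k * m - 1) * of_nat (k * m) * G))"
      by (simp only: e1 e2 e3)
    have kX: "of_nat k * X \<in> Gamma_less (\<lambda>_::unit. k * m)"
      unfolding kXeq Gamma_less_def by (rule ga_of_int_mult[OF D[unfolded Gamma_less_def]])
    obtain z :: "'d \<Rightarrow> complex" and \<rho> \<omega> T where rot: "\<rho> permutes UNIV" "\<forall>j. z (\<rho> j) = \<omega> * z j"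
      "\<forall>t. 0 < t \<and> t < k * m \<longrightarrow> \<omega> ^ t \<noteq> 1" "card T = k * m" "\<forall>j. j \<notin> T \<longrightarrow> z j = 0" "\<forall>j\<in>T. z j \<noteq> 0"
      using rotation_exists[OF km0 kmd] by blast
    have van: "coeff (EV z p) (k * m) = 0" if "p \<in> Gamma_less (\<lambda>_::unit. k * m)" for p
      by (rule strong_vanish[OF rot(1), of z \<omega> "k * m" p]) (use rot(2,3) that km0 in auto)
    have "coeff (EV z (of_nat k * X)) (k * m) = of_nat k * coeff (EV z X) (k * m)"
      by (simp add: EV_mult EV_of_nat of_nat_monom coeff_monom_mult)
    then have "coeff (EV z X) (k * m) = 0" using van[OF kX] k0 by simp
    moreover have "coeff (EV z (X - Poly_Mapping.single 0 c * G)) (k * m) = coeff (EV z X) (k * m) - of_int c * coeff (EV z G) (k * m)"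
      by (simp add: EV_diff EV_mult EV_single0 of_int_monom coeff_monom_mult)
    ultimately have "of_int c * coeff (EV z G) (k * m) = 0" using van[OF span] by simp
    moreover have "coeff (EV z G) (k * m) \<noteq> 0"
      unfolding G_def by (rule phi_G_nonzero[OF rot(4)]) (use rot(5,6) in auto)
    ultimately have "c = 0" by simp
    then show ?thesis using span by simp
  qed
  then show ?thesis unfolding X_def H_def G_def c0e[symmetric] .
qed


definition Psi :: "('r::finite \<Rightarrow> nat) \<Rightarrow> ('d::finite, unit, int) tens \<Rightarrow> ('d, 'r, 'a::comm_ring_1) tens" where
  "Psi \<alpha> p = ext (\<lambda>E. ptensor (\<lambda>j i. vec E j * \<alpha> i)) of_int p"

lemma Psi_W_mult: "ptensor (\<lambda>j i. vec (x + y) j * \<alpha> i) = ptensor (\<lambda>j i. vec x j * \<alpha> i) * (ptensor (\<lambda>j i. vec y j * \<alpha> i) :: ('d::finite, 'r::finite, 'a::comm_ring_1) tens)"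
  by (simp add: ptensor_mult vec_add distrib_right)

lemma Psi_add: "Psi \<alpha> (p + q) = Psi \<alpha> p + Psi \<alpha> q"
  unfolding Psi_def by (rule ext_add) simp_all

lemma Psi_mult: "Psi \<alpha> (p * q) = Psi \<alpha> p * Psi \<alpha> q"
  unfolding Psi_def by (rule ext_mult) (simp_all only: Psi_W_mult of_int_add of_int_mult of_int_0)

lemma Psi_diff: "Psi \<alpha> (p - q) = Psi \<alpha> p - Psi \<alpha> q"
  unfolding Psi_def by (rule ext_diff) simp_all

lemma Psi_sum: "Psi \<alpha> (\<Sum>i\<in>I. f i) = (\<Sum>i\<in>I. Psi \<alpha> (f i))"
  unfolding Psi_def by (rule ext_sum) simp_all

lemma Psi_single0: "(Psi \<alpha> (Poly_Mapping.single 0 c) :: ('d::finite, 'r::finite, 'a::comm_ring_1) tens) = of_int c"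
proof -
  have "(\<lambda>j i. vec (0 :: ('d \<times> unit) \<Rightarrow>\<^sub>0 nat) j * \<alpha> i) = (\<lambda>_ _. 0)" by (simp add: vec_zero fun_eq_iff)
  then show ?thesis unfolding Psi_def by (simp add: ext_single ptensor_zero)
qed

lemma Psi_ptensor: "(Psi \<alpha> (ptensor e) :: ('d::finite, 'r::finite, 'a::comm_ring_1) tens) = ptensor (\<lambda>j i. e j () * \<alpha> i)"
proof -
  have "vec (tmon e :: ('d \<times> unit) \<Rightarrow>\<^sub>0 nat) j = e j ()" for j by (simp add: vec_def lookup_tmon)
  then show ?thesis unfolding Psi_def ptensor_def by (simp add: ext_single)
qed

lemma Psi_gam: "(Psi \<alpha> (gam k (\<lambda>_::unit. b)) :: ('d::finite, 'r::finite, 'a::comm_ring_1) tens) = gam k (\<lambda>i. b * \<alpha> i)"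
proof -
  have "(\<lambda>j i. ind S (\<lambda>_::unit. b) j () * \<alpha> i) = ind S (\<lambda>i. b * \<alpha> i)" for S :: "'d set"
    by (simp add: ind_def fun_eq_iff)
  then show ?thesis unfolding gam_ind Psi_sum Psi_ptensor by simp
qed

lemma Psi_sym:
  assumes sym: "symmetric (p :: ('d::finite, unit, int) tens)"
  shows "symmetric (Psi \<alpha> p :: ('d, 'r::finite, 'a::comm_ring_1) tens)"
  unfolding symmetric_act
proof (intro allI impI)
  fix \<sigma> :: "'d \<Rightarrow> 'd" assume \<sigma>: "\<sigma> permutes UNIV"
  define \<tau> where "\<tau> = inv \<sigma>"
  have \<tau>: "\<tau> permutes UNIV" unfolding \<tau>_def by (rule permutes_inv[OF \<sigma>])
  have \<tau>\<sigma>: "\<tau> (\<sigma> j) = j" "\<sigma> (\<tau> j) = j" for j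
    unfolding \<tau>_def using permutes_inverses[OF \<sigma>] by simp_all
  let ?W = "\<lambda>E. ptensor (\<lambda>j i. vec E j * \<alpha> i) :: ('d, 'r, 'a) tens"
  have lk: "Poly_Mapping.lookup p (perm_mon \<pi> E) = Poly_Mapping.lookup p E" if "\<pi> permutes UNIV" for \<pi> E
    using sym that unfolding symmetric_def by blast
  have bij: "bij_betw (perm_mon \<tau>) (Poly_Mapping.keys p) (Poly_Mapping.keys p)"
  proof (rule bij_betw_byWitness[where f'="perm_mon \<sigma>"])
    show "\<forall>a\<in>Poly_Mapping.keys p. perm_mon \<sigma> (perm_mon \<tau> a) = a"
      by (simp add: perm_mon_comp \<tau>\<sigma> comp_def perm_mon_id[unfolded id_def])
    show "\<forall>a\<in>Poly_Mapping.keys p. perm_mon \<tau> (perm_mon \<sigma> a) = a"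
      by (simp add: perm_mon_comp \<tau>\<sigma> comp_def perm_mon_id[unfolded id_def])
    show "perm_mon \<tau> ` Poly_Mapping.keys p \<subseteq> Poly_Mapping.keys p"
      using lk[OF \<tau>] by (auto simp: in_keys_iff)
    show "perm_mon \<sigma> ` Poly_Mapping.keys p \<subseteq> Poly_Mapping.keys p"
      using lk[OF \<sigma>] by (auto simp: in_keys_iff)
  qed
  have actW: "act \<sigma> (?W E) = ?W (perm_mon \<tau> E)" for E
    unfolding act_ptensor by (simp add: vec_def lookup_perm_mon \<tau>_def)
  have "act \<sigma> (Psi \<alpha> p :: ('d, 'r, 'a) tens) = (\<Sum>E\<in>Poly_Mapping.keys p. of_int (Poly_Mapping.lookup p E) * act \<sigma> (?W E))"
    unfolding Psi_def ext_def act_sum act_mult act_of_int ..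
  also have "\<dots> = (\<Sum>E\<in>Poly_Mapping.keys p. of_int (Poly_Mapping.lookup p (perm_mon \<tau> E)) * ?W (perm_mon \<tau> E))"
    by (rule sum.cong) (simp_all add: actW lk[OF \<tau>])
  also have "\<dots> = (\<Sum>E\<in>Poly_Mapping.keys p. of_int (Poly_Mapping.lookup p E) * ?W E)"
    by (rule sum.reindex_bij_betw[OF bij])
  also have "\<dots> = Psi \<alpha> p" unfolding Psi_def ext_def ..
  finally show "act \<sigma> (Psi \<alpha> p :: ('d, 'r, 'a) tens) = Psi \<alpha> p" .
qed

lemma Psi_homog:
  assumes hom: "homogeneous (\<lambda>_. t) (p :: ('d::finite, unit, int) tens)"
  shows "homogeneous (\<lambda>i. t * \<alpha> i) (Psi \<alpha> p :: ('d, 'r::finite, 'a::comm_ring_1) tens)"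
  unfolding Psi_def ext_def
proof (rule homog_sum)
  fix E assume E: "E \<in> Poly_Mapping.keys p"
  have "(\<lambda>i. \<Sum>j\<in>UNIV. vec E j * \<alpha> i) = (\<lambda>i. t * \<alpha> i)"
    using hom E unfolding homog_unit by (simp add: sum_distrib_right[symmetric])
  then have h: "homogeneous (\<lambda>i. t * \<alpha> i) (ptensor (\<lambda>j i. vec E j * \<alpha> i) :: ('d, 'r, 'a) tens)"
    using homog_ptensor[of "\<lambda>j i. vec E j * \<alpha> i"] by simp
  have "(of_int (Poly_Mapping.lookup p E) :: ('d, 'r, 'a) tens) = Poly_Mapping.single 0 (of_int (Poly_Mapping.lookup p E))"
    by simp
  then show "homogeneous (\<lambda>i. t * \<alpha> i) (of_int (Poly_Mapping.lookup p E) * ptensor (\<lambda>j i. vec E j * \<alpha> i) :: ('d, 'r, 'a) tens)"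
    using homog_scalar[OF h] by metis
qed

lemma Psi_GL:
  fixes \<alpha> :: "'r::finite \<Rightarrow> nat"
  assumes \<alpha>x: "\<alpha> x \<noteq> 0" and p: "(p :: ('d::finite, unit, int) tens) \<in> Gamma_less (\<lambda>_. n)"
  shows "(Psi \<alpha> p :: ('d, 'r, 'a::comm_ring_1) tens) \<in> Gamma_less (\<lambda>i. n * \<alpha> i)"
  using p unfolding Gamma_less_def
proof (induction rule: gen_alg.induct)
  case (scalar a)
  then show ?case unfolding Psi_single0 by (rule ga_of_int)
next
  case (gen g)
  then obtain \<beta> where g: "symmetric g" "\<beta> < (\<lambda>_. n)" "homogeneous \<beta> g" by blast
  have \<beta>: "\<beta> = (\<lambda>_. \<beta> ())" by (auto simp: fun_eq_iff)
  have \<beta>n: "\<beta> () < n"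
  proof -
    have "\<not> (\<lambda>_::unit. n) \<le> \<beta>" using g(2) by (simp add: less_fun_def)
    then show ?thesis by (auto simp: le_fun_def not_le)
  qed
  have hom: "homogeneous (\<lambda>_. \<beta> ()) g" using g(3) \<beta> by simp
  have "(Psi \<alpha> g :: ('d, 'r, 'a) tens) \<in> Gamma_less (\<lambda>i. n * \<alpha> i)"
    by (rule gen_in_GL[OF Psi_sym[OF g(1)] Psi_homog[OF hom] less_fun_scale[where a="\<beta> ()" and b=n and \<beta>=\<alpha> and x=x, OF \<beta>n \<alpha>x]])
  then show ?case unfolding Gamma_less_def .
next
  case (add p q)
  show ?case unfolding Psi_add by (rule gen_alg.add[OF add.IH])
next
  case (mult p q)
  show ?case unfolding Psi_mult by (rule gen_alg.mult[OF mult.IH])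
qed


lemma gam_zero_exp: "(gam j (\<lambda>_::'r. 0) :: ('d::finite, 'r::finite, 'a::comm_ring_1) tens) = of_nat (card {S::'d set. card S = j})"
proof -
  have "ind S (\<lambda>_::'r. 0) = (\<lambda>_ _. 0)" for S :: "'d set" by (simp add: ind_def fun_eq_iff)
  then show ?thesis unfolding gam_ind by (simp add: ptensor_zero)
qed

theorem proposition7p5:
  fixes \<alpha> :: "'r::finite \<Rightarrow> nat" and k m :: nat
  assumes "0 < k" and "0 < m" and "k \<le> card (UNIV :: 'd set)"
  shows "(k * m \<le> card (UNIV :: 'd set) \<longrightarrow>
            (gam k (\<lambda>i. m * \<alpha> i) :: ('d::finite, 'r, 'a::comm_ring_1) tens)
              - ((- 1) ^ (k * m - k) * of_nat m) * gam (k * m) \<alpha>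
            \<in> Gamma_less (\<lambda>i. k * m * \<alpha> i))
       \<and> (card (UNIV :: 'd set) < k * m \<longrightarrow>
            (gam k (\<lambda>i. m * \<alpha> i) :: ('d, 'r, 'a) tens) \<in> Gamma_less (\<lambda>i. k * m * \<alpha> i))"
proof -
  define c0 :: int where "c0 = (-1) ^ (k * m - k) * int m"
  have sc_t: "((- 1) ^ (k * m - k) * of_nat m :: ('d, 'r, 'a) tens) = of_int c0"
    by (simp add: c0_def)
  have main: "(gam k (\<lambda>i. m * \<alpha> i) :: ('d, 'r, 'a) tens) - ((- 1) ^ (k * m - k) * of_nat m) * gam (k * m) \<alpha>
      \<in> Gamma_less (\<lambda>i. k * m * \<alpha> i)"
  proof (cases "\<exists>x. \<alpha> x \<noteq> 0")
    case True
    then obtain x where x: "\<alpha> x \<noteq> 0" by blast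
    have U: "(gam k (\<lambda>_::unit. m) :: ('d, unit, int) tens) - ((-1) ^ (k * m - k) * of_nat m) * gam (k * m) (\<lambda>_::unit. 1)
        \<in> Gamma_less (\<lambda>_::unit. k * m)"
      by (rule unit_main) (use assms in auto)
    have sc: "(Poly_Mapping.single 0 c0 :: ('d, unit, int) tens) = of_int c0"
      by (simp add: single_of_int[of c0, symmetric])
    have sc_u: "((- 1) ^ (k * m - k) * of_nat m :: ('d, unit, int) tens) = Poly_Mapping.single 0 c0"
      unfolding sc by (simp add: c0_def)
    have e: "(Psi \<alpha> ((gam k (\<lambda>_::unit. m) :: ('d, unit, int) tens) - ((-1) ^ (k * m - k) * of_nat m) * gam (k * m) (\<lambda>_::unit. 1)) :: ('d, 'r, 'a) tens)
        = gam k (\<lambda>i. m * \<alpha> i) - ((- 1) ^ (k * m - k) * of_nat m) * gam (k * m) \<alpha>"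
      unfolding Psi_diff Psi_mult Psi_gam sc_u Psi_single0 sc_t by simp
    show ?thesis using Psi_GL[where \<alpha>=\<alpha> and x=x and n="k * m", OF x U, where 'a='a] unfolding e .
  next
    case False
    then have a0: "\<alpha> = (\<lambda>_. 0)" by auto
    have "(gam k (\<lambda>i. m * \<alpha> i) :: ('d, 'r, 'a) tens) - ((- 1) ^ (k * m - k) * of_nat m) * gam (k * m) \<alpha>
        = of_int (int (card {S::'d set. card S = k}) - c0 * int (card {S::'d set. card S = k * m}))"
      unfolding sc_t a0 by (simp add: gam_zero_exp)
    then show ?thesis unfolding Gamma_less_def by (simp only: ga_of_int)
  qed
  show ?thesis
  proof (intro conjI impI)
    show "(gam k (\<lambda>i. m * \<alpha> i) :: ('d, 'r, 'a) tens) - ((- 1) ^ (k * m - k) * of_nat m) * gam (k * m) \<alpha>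
        \<in> Gamma_less (\<lambda>i. k * m * \<alpha> i)" by (rule main)
  next
    assume "card (UNIV :: 'd set) < k * m"
    then have "(gam (k * m) \<alpha> :: ('d, 'r, 'a) tens) = 0" by (rule gam_zero_big)
    then show "(gam k (\<lambda>i. m * \<alpha> i) :: ('d, 'r, 'a) tens) \<in> Gamma_less (\<lambda>i. k * m * \<alpha> i)"
      using main by simp
  qed
qed


end
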